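(* Let $\frac13<r_0<\frac12$, with $\sigma_3$, $L_1,L_2$ and $m_1,m_2$ as in the context. Then for every integer $n\ge0$, $$\mathbb P(\sigma_3=n\mid m_1,m_2)=\frac{1}{\binom{m_1+m_2}{m_1}}\,\#\Big\{\Pi\in\mathcal P([m_1\times m_2]) : \sum_{r=0}^{m_1} r\,\pi^\star(\Pi)(r)=n\Big\}.$$ That is, the probability equals the proportion of up-right lattice paths from $(0,0)$ to $(m_1,m_2)$ enclosing area $n$ with the axis.
   Context: Fix $\lambda>0$. Let $\mathcal P_\lambda$ be a homogeneous Poisson point process of intensity $\lambda$ on $[0,1]$. Set $V=\mathcal P_\lambda\cup\{0,1\}$ and let $G$ be the graph on $V$ in which distinct $x,y$ are adjacent iff $|x-y|<r_0$. A $3$-hop path from $0$ to $1$ is a sequence of vertices $0=v_0,v_1,v_2,v_3=1$ of $G$ with consecutive vertices adjacent. $\sigma_3$ is the number of such paths. The lenses are $L_1=(1-2r_0,r_0)$ and $L_2=(1-r_0,2r_0)$, and $m_j=\#(\mathcal P_\lambda\cap L_j)$. $\mathcal P([m_1\times m_2])$ is the set of words with $m_1$ letters $a$ and $m_2$ letters $b$. For such $\Pi$, $\pi(\Pi)(s)$ is the number of $a$'s preceding the $s$-th $b$, and $\pi^\star(\Pi)(r)=\#\{s:\pi(\Pi)(s)=r\}$. *)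

theory Defs
  imports "HOL-Probability.Probability"
begin

text \<open>Homogeneous Poisson point process of intensity lam on [0,1], realised in the
standard way: a Poisson(lam) number N of points, which are the first N entries of an
i.i.d. sequence U of uniform points on [0,1], N independent of U.\<close>

definition ppp_space :: "real \<Rightarrow> (nat \<times> (nat \<Rightarrow> real)) measure" where
  "ppp_space lam =
     measure_pmf (poisson_pmf lam) \<Otimes>\<^sub>M (\<Pi>\<^sub>M i\<in>(UNIV::nat set). uniform_measure lborel {0..1::real})"

definition ppp_points :: "nat \<times> (nat \<Rightarrow> real) \<Rightarrow> real set" where
  "ppp_points \<omega> = snd \<omega> ` {..<fst \<omega>}"

definition vert :: "real set \<Rightarrow> real set" where
  "vert P = P \<union> {0, 1}"

definition adj :: "real \<Rightarrow> real \<Rightarrow> real \<Rightarrow> bool" where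
  "adj r0 x y \<longleftrightarrow> x \<noteq> y \<and> \<bar>x - y\<bar> < r0"

definition sigma3 :: "real \<Rightarrow> real set \<Rightarrow> nat" where
  "sigma3 r0 P = card {(v0, v1, v2, v3). v0 = 0 \<and> v3 = 1 \<and>
      v0 \<in> vert P \<and> v1 \<in> vert P \<and> v2 \<in> vert P \<and> v3 \<in> vert P \<and>
      adj r0 v0 v1 \<and> adj r0 v1 v2 \<and> adj r0 v2 v3}"

definition lens1 :: "real \<Rightarrow> real set" where "lens1 r0 = {1 - 2*r0 <..< r0}"
definition lens2 :: "real \<Rightarrow> real set" where "lens2 r0 = {1 - r0 <..< 2*r0}"

definition mcount :: "real set \<Rightarrow> real set \<Rightarrow> nat" where
  "mcount L P = card (P \<inter> L)"

text \<open>Words with m1 letters a (True) and m2 letters b (False).\<close>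
definition words :: "nat \<Rightarrow> nat \<Rightarrow> bool list set" where
  "words m1 m2 = {w. length w = m1 + m2 \<and> count_list w True = m1 \<and> count_list w False = m2}"

definition bpos :: "bool list \<Rightarrow> nat list" where
  "bpos w = filter (\<lambda>i. \<not> w ! i) [0..<length w]"

text \<open>pi w s = number of a's preceding the s-th b (s = 1, 2, ...).\<close>
definition piw :: "bool list \<Rightarrow> nat \<Rightarrow> nat" where
  "piw w s = count_list (take (bpos w ! (s - 1)) w) True"

definition pistar :: "bool list \<Rightarrow> nat \<Rightarrow> nat" where
  "pistar w r = card {s \<in> {1..count_list w False}. piw w s = r}"

end

theory Submission
  imports Defs
begin


lemma distr_PiM_coordmap:
  fixes M :: "'a measure"
  assumes P: "prob_space M" and h[measurable]: "\<And>i. h i \<in> measurable M M"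
    and hd: "\<And>i. distr M M (h i) = M"
  shows "distr (PiM UNIV (\<lambda>_. M)) (PiM UNIV (\<lambda>_. M)) (\<lambda>\<omega> i. h i (\<omega> i)) = PiM UNIV (\<lambda>_. M)"
    (is "distr ?K ?K ?t = ?K")
proof (rule measure_eqI_PiM_infinite[symmetric, OF refl])
  interpret prob_space ?K using P by (intro prob_space_PiM) auto
  show "finite_measure ?K" by unfold_locales
  have tm: "?t \<in> measurable ?K ?K"
    by (rule measurable_PiM_single') (auto simp: space_PiM intro: measurable_space[OF h])
  fix A J assume J: "finite J" "J \<subseteq> (UNIV::'b set)" and A: "\<And>i. i \<in> J \<Longrightarrow> A i \<in> sets M"
  have "?K (prod_emb UNIV (\<lambda>_. M) J (Pi\<^sub>E J A)) = (\<Prod>j\<in>J. M (A j))"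
    using J A by (intro emeasure_PiM_emb P) auto
  also have "\<dots> = (\<Prod>j\<in>J. M (h j -` A j \<inter> space M))"
  proof (intro prod.cong refl)
    fix j assume "j \<in> J"
    have "M (A j) = distr M M (h j) (A j)" by (simp add: hd)
    also have "\<dots> = M (h j -` A j \<inter> space M)" using A \<open>j\<in>J\<close> by (simp add: emeasure_distr)
    finally show "M (A j) = M (h j -` A j \<inter> space M)" .
  qed
  also have "\<dots> = ?K (prod_emb UNIV (\<lambda>_. M) J (Pi\<^sub>E J (\<lambda>j. h j -` A j \<inter> space M)))"
    using J A by (intro emeasure_PiM_emb[symmetric] P) auto
  also have "prod_emb UNIV (\<lambda>_. M) J (Pi\<^sub>E J (\<lambda>j. h j -` A j \<inter> space M)) = ?t -` prod_emb UNIV (\<lambda>_. M) J (Pi\<^sub>E J A) \<inter> space ?K"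
    using J A by (auto simp: prod_emb_def space_PiM Pi_iff PiE_iff intro: measurable_space[OF h])
  also have "?K \<dots> = distr ?K ?K ?t (prod_emb UNIV (\<lambda>_. M) J (Pi\<^sub>E J A))"
    using J A tm by (intro emeasure_distr[symmetric] sets_PiM_I) (auto simp: Pi_iff)
  finally show "?K (prod_emb UNIV (\<lambda>_. M) J (Pi\<^sub>E J A)) = distr ?K ?K ?t (prod_emb UNIV (\<lambda>_. M) J (Pi\<^sub>E J A))" .
qed simp


abbreviation "M01 \<equiv> uniform_measure lborel {0..1::real}"

lemma prob_M01: "prob_space M01"
  by (intro prob_space_uniform_measure) auto

lemma sets_M01[simp, measurable_cong]: "sets M01 = sets borel" by simp
lemma space_M01[simp]: "space M01 = UNIV" by simp

lemma emeasure_M01: "A \<in> sets borel \<Longrightarrow> emeasure M01 A = emeasure lborel (A \<inter> {0..1})"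
  by (simp add: emeasure_uniform_measure Int_commute divide_ennreal_def)

definition Sw :: "real \<Rightarrow> real \<Rightarrow> real" where
  "Sw r0 x = (if x \<in> lens1 r0 then x + r0 else if x \<in> lens2 r0 then x - r0 else x)"

lemma Sw_meas[measurable]: "Sw r0 \<in> borel_measurable borel"
  unfolding Sw_def lens1_def lens2_def by measurable

lemma Sw_meas01: "Sw r0 \<in> measurable M01 M01"
  by (simp add: measurable_cong_sets[OF sets_M01 sets_M01])

lemma lborel_transl: "A \<in> sets borel \<Longrightarrow> emeasure lborel ((\<lambda>x::real. x + t) -` A) = emeasure lborel A"
proof -
  assume A: "A \<in> sets borel"
  have "emeasure lborel A = emeasure (distr lborel borel ((+) t)) A" by (simp add: lborel_distr_plus)
  also have "\<dots> = emeasure lborel ((+) t -` A)" using A by (simp add: emeasure_distr)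
  moreover have "(\<lambda>x. x + t) = (+) t" by (auto simp: fun_eq_iff)
  ultimately show ?thesis by simp
qed

lemma Sw_distr:
  assumes "1/3 < r0" "r0 < 1/2"
  shows "distr M01 M01 (Sw r0) = M01"
proof (rule measure_eqI)
  fix A assume "A \<in> sets (distr M01 M01 (Sw r0))"
  then have A[measurable]: "A \<in> sets borel" by simp
  define L1 where "L1 = lens1 r0"
  define L2 where "L2 = lens2 r0"
  define R where "R = {0..1} - L1 - L2"
  have L1m[measurable]: "L1 \<in> sets borel" and L2m[measurable]: "L2 \<in> sets borel" and Rm[measurable]: "R \<in> sets borel"
    by (auto simp: L1_def L2_def R_def lens1_def lens2_def)
  have sub: "L1 \<subseteq> {0..1}" "L2 \<subseteq> {0..1}" "L1 \<inter> L2 = {}"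
    using assms by (auto simp: L1_def L2_def lens1_def lens2_def)
  have dec: "X \<inter> {0..1} = (X \<inter> R) \<union> ((X \<inter> L1) \<union> (X \<inter> L2))" for X
    using sub by (auto simp: R_def)
  have add: "emeasure lborel (X \<inter> {0..1}) = emeasure lborel (X \<inter> R) + (emeasure lborel (X \<inter> L1) + emeasure lborel (X \<inter> L2))"
    if [measurable]: "X \<in> sets borel" for X
    apply (subst dec)
    apply (subst plus_emeasure[symmetric], (use sub in \<open>auto simp: R_def\<close>)[3])
    apply (subst plus_emeasure[symmetric], (use sub in \<open>auto simp: R_def\<close>)[3])
    by (simp add: Un_assoc)
  have pre: "Sw r0 -` A \<in> sets borel" using measurable_sets[OF Sw_meas A] by simp
  have e1: "Sw r0 -` A \<inter> R = A \<inter> R"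
    by (auto simp: Sw_def R_def L1_def L2_def)
  have e2: "Sw r0 -` A \<inter> L1 = (\<lambda>x. x + r0) -` (A \<inter> L2)"
    using assms by (auto simp: Sw_def L1_def L2_def lens1_def lens2_def)
  have e3: "Sw r0 -` A \<inter> L2 = (\<lambda>x. x + (-r0)) -` (A \<inter> L1)"
    using assms by (auto simp: Sw_def L1_def L2_def lens1_def lens2_def)
  have "emeasure (distr M01 M01 (Sw r0)) A = emeasure M01 (Sw r0 -` A)"
    using Sw_meas01 by (simp add: emeasure_distr)
  also have "\<dots> = emeasure lborel (Sw r0 -` A \<inter> {0..1})" using pre by (simp add: Int_commute divide_ennreal_def)
  also have "\<dots> = emeasure lborel (A \<inter> R) + (emeasure lborel (Sw r0 -` A \<inter> L1) + emeasure lborel (Sw r0 -` A \<inter> L2))"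
    using add[OF pre] e1 by simp
  also have "\<dots> = emeasure lborel (A \<inter> R) + (emeasure lborel (A \<inter> L2) + emeasure lborel (A \<inter> L1))"
  proof -
    have t2: "emeasure lborel ((\<lambda>x. x + r0) -` (A \<inter> L2)) = emeasure lborel (A \<inter> L2)" by (rule lborel_transl) simp
    have t3: "emeasure lborel ((\<lambda>x. x + (-r0)) -` (A \<inter> L1)) = emeasure lborel (A \<inter> L1)" by (rule lborel_transl) simp
    show ?thesis unfolding e2 e3 t2 t3 ..
  qed
  also have "\<dots> = emeasure lborel (A \<inter> {0..1})" by (simp add: add add_ac)
  also have "\<dots> = emeasure M01 A" by (simp add: Int_commute divide_ennreal_def)
  finally show "emeasure (distr M01 M01 (Sw r0)) A = emeasure M01 A" .
qed simp

abbreviation "Mu \<equiv> PiM (UNIV::nat set) (\<lambda>_. M01)"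

lemma pair_distr:
  assumes "i \<noteq> j"
  shows "distr Mu (M01 \<Otimes>\<^sub>M M01) (\<lambda>U. (U i, U j)) = M01 \<Otimes>\<^sub>M M01"
proof (rule pair_measure_eqI[symmetric])
  interpret prob_space M01 by (rule prob_M01)
  show "sigma_finite_measure M01" "sigma_finite_measure M01" by unfold_locales
  show "sets (M01 \<Otimes>\<^sub>M M01) = sets (distr Mu (M01 \<Otimes>\<^sub>M M01) (\<lambda>U. (U i, U j)))" by simp
  fix A B assume A: "A \<in> sets M01" and B: "B \<in> sets M01"
  have "(\<lambda>U. (U i, U j)) -` (A \<times> B) \<inter> space Mu = prod_emb UNIV (\<lambda>_. M01) {i,j} (Pi\<^sub>E {i,j} (\<lambda>l. if l = i then A else B))"
    using assms by (auto simp: prod_emb_def space_PiM PiE_iff)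
  moreover have "emeasure Mu (prod_emb UNIV (\<lambda>_. M01) {i,j} (Pi\<^sub>E {i,j} (\<lambda>l. if l = i then A else B))) = emeasure M01 A * emeasure M01 B"
    using assms A B by (subst emeasure_PiM_emb) (auto intro: prob_M01)
  moreover have "(\<lambda>U. (U i, U j)) \<in> measurable Mu (M01 \<Otimes>\<^sub>M M01)" by measurable
  ultimately show "emeasure M01 A * emeasure M01 B = emeasure (distr Mu (M01 \<Otimes>\<^sub>M M01) (\<lambda>U. (U i, U j))) (A \<times> B)"
    using A B by (simp add: emeasure_distr)
qed

lemma null_shift:
  assumes "i \<noteq> j"
  shows "emeasure Mu {U \<in> space Mu. U j = U i + t} = 0"
proof -
  interpret prob_space M01 by (rule prob_M01)
  have "{p \<in> space (M01 \<Otimes>\<^sub>M M01). snd p = fst p + t} \<in> sets (M01 \<Otimes>\<^sub>M M01)" by measurable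
  then have D[measurable]: "{p::real\<times>real. snd p = fst p + t} \<in> sets (M01 \<Otimes>\<^sub>M M01)" by (simp add: space_pair_measure)
  have m: "(\<lambda>U. (U i, U j)) \<in> measurable Mu (M01 \<Otimes>\<^sub>M M01)" by measurable
  have "{U \<in> space Mu. U j = U i + t} = (\<lambda>U. (U i, U j)) -` {p. snd p = fst p + t} \<inter> space Mu" by auto
  moreover have "emeasure (distr Mu (M01 \<Otimes>\<^sub>M M01) (\<lambda>U. (U i, U j))) {p. snd p = fst p + t} = emeasure Mu ((\<lambda>U. (U i, U j)) -` {p. snd p = fst p + t} \<inter> space Mu)"
    by (rule emeasure_distr[OF m D])
  ultimately have "emeasure Mu {U \<in> space Mu. U j = U i + t} = emeasure (distr Mu (M01 \<Otimes>\<^sub>M M01) (\<lambda>U. (U i, U j))) {p. snd p = fst p + t}"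
    by simp
  also have "\<dots> = emeasure (M01 \<Otimes>\<^sub>M M01) {p. snd p = fst p + t}" by (simp add: pair_distr assms)
  also have "\<dots> = (\<integral>\<^sup>+x. emeasure M01 (Pair x -` {p. snd p = fst p + t}) \<partial>M01)"
    by (rule emeasure_pair_measure_alt) (rule D)
  also have "\<dots> = (\<integral>\<^sup>+x. 0 \<partial>M01)"
  proof (rule nn_integral_cong)
    fix x
    have "Pair x -` {p. snd p = fst p + t} = {x + t}" by auto
    moreover have "emeasure lborel ({x + t} \<inter> {0..1}) \<le> emeasure lborel {x+t}" by (rule emeasure_mono) auto
    ultimately show "emeasure M01 (Pair x -` {p. snd p = fst p + t}) = 0"
      by (simp add: Int_commute divide_ennreal_def)
  qed
  finally show ?thesis by simp
qed


definition invw :: "bool list \<Rightarrow> nat" where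
  "invw w = card {(r,s). r < s \<and> s < length w \<and> w!r \<and> \<not> w!s}"

lemma count_card: "count_list xs y = card {i. i < length xs \<and> xs!i = y}"
  by (simp add: count_list_eq_length_filter length_filter_conv_card eq_commute)

lemma bpos_length: "length (bpos w) = count_list w False"
  unfolding bpos_def count_card length_filter_conv_card by (intro arg_cong[where f=card]) auto

lemma bpos_snoc: "bpos (w @ [x]) = bpos w @ (if x then [] else [length w])"
proof -
  have "bpos (w @ [x]) = filter (\<lambda>i. \<not> (w@[x]) ! i) [0..<length w] @ filter (\<lambda>i. \<not> (w@[x]) ! i) [length w]"
    by (simp add: bpos_def)
  also have "filter (\<lambda>i. \<not> (w@[x]) ! i) [0..<length w] = bpos w"
    unfolding bpos_def by (rule filter_cong) (auto simp: nth_append)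
  finally show ?thesis by simp
qed

lemma bpos_lt: "i < length (bpos w) \<Longrightarrow> bpos w ! i < length w"
  using nth_mem[of i "bpos w"] by (auto simp: bpos_def)

lemma piw_snoc_old:
  assumes "1 \<le> s" "s \<le> count_list w False"
  shows "piw (w @ [x]) s = piw w s"
proof -
  have lt: "s - 1 < length (bpos w)" using assms by (simp add: bpos_length)
  then have "bpos (w@[x]) ! (s-1) = bpos w ! (s-1)" by (simp add: bpos_snoc nth_append)
  moreover have "bpos w ! (s-1) < length w" using bpos_lt[OF lt] .
  ultimately show ?thesis by (simp add: piw_def)
qed

lemma piw_snoc_new:
  "piw (w @ [False]) (Suc (count_list w False)) = count_list w True"
  by (simp add: piw_def bpos_snoc nth_append bpos_length)

definition gw :: "bool list \<Rightarrow> nat" where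
  "gw w = (\<Sum>s\<in>{1..count_list w False}. piw w s)"

lemma gw_snoc: "gw (w @ [x]) = gw w + (if x then 0 else count_list w True)"
proof (cases x)
  case True
  then show ?thesis by (simp add: gw_def piw_snoc_old)
next
  case False
  have "gw (w @ [x]) = (\<Sum>s\<in>{1..count_list w False + 1}. piw (w@[False]) s)"
    using False by (simp add: gw_def)
  also have "\<dots> = (\<Sum>s\<in>{1..count_list w False}. piw (w@[False]) s) + piw (w@[False]) (count_list w False + 1)"
    by simp
  also have "\<dots> = gw w + count_list w True"
    by (simp add: gw_def piw_snoc_old piw_snoc_new)
  finally show ?thesis using False by simp
qed

lemma invw_snoc: "invw (w @ [x]) = invw w + (if x then 0 else count_list w True)"
proof -
  let ?S = "\<lambda>v. {(r,s). r < s \<and> s < length v \<and> v!r \<and> \<not> v!s}"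
  have eq: "?S (w@[x]) = ?S w \<union> (if x then {} else (\<lambda>r. (r, length w)) ` {r. r < length w \<and> w!r})"
    by (auto simp: nth_append less_Suc_eq split: if_splits)
  have fin: "finite (?S v)" for v
    by (rule finite_subset[of _ "{..<length v} \<times> {..<length v}"]) auto
  have disj: "?S w \<inter> (\<lambda>r. (r, length w)) ` {r. r < length w \<and> w!r} = {}" by auto
  show ?thesis
  proof (cases x)
    case True then show ?thesis unfolding invw_def eq by simp
  next
    case False
    have "card (?S (w@[x])) = card (?S w) + card ((\<lambda>r. (r, length w)) ` {r. r < length w \<and> w!r})"
      unfolding eq using False fin disj by (simp add: card_Un_disjoint)
    also have "card ((\<lambda>r. (r, length w)) ` {r. r < length w \<and> w!r}) = count_list w True"
      by (subst card_image) (auto simp: inj_on_def count_card)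
    finally show ?thesis using False by (simp add: invw_def)
  qed
qed

lemma gw_invw: "gw w = invw w"
proof (induction w rule: rev_induct)
  case Nil
  then show ?case by (simp add: gw_def invw_def)
next
  case (snoc x xs)
  then show ?case by (simp add: gw_snoc invw_snoc)
qed

lemma piw_le: "piw w s \<le> count_list w True"
proof -
  have "count_list w True = count_list (take k w) True + count_list (drop k w) True" for k
    by (metis append_take_drop_id count_list_append)
  then show ?thesis unfolding piw_def by (metis le_add1)
qed

lemma area_eq_invw:
  "(\<Sum>r = 0..count_list w True. r * pistar w r) = invw w"
proof -
  let ?S = "{1..count_list w False}"
  have "(\<Sum>r = 0..count_list w True. r * pistar w r) = (\<Sum>r = 0..count_list w True. \<Sum>s\<in>{s \<in> ?S. piw w s = r}. piw w s)"
    unfolding pistar_def by (intro sum.cong refl) simp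
  also have "\<dots> = (\<Sum>s\<in>?S. piw w s)"
    by (rule sum.group) (auto simp: piw_le)
  also have "\<dots> = invw w" using gw_invw by (simp add: gw_def)
  finally show ?thesis .
qed

lemma area_words:
  "w \<in> words a b \<Longrightarrow> (\<Sum>r = 0..a. r * pistar w r) = invw w"
  using area_eq_invw[of w] by (simp add: words_def)


definition BT :: "nat set \<Rightarrow> (nat \<Rightarrow> nat) set" where
  "BT T = {\<sigma>. \<sigma> \<in> T \<rightarrow>\<^sub>E {..<card T} \<and> bij_betw \<sigma> T {..<card T}}"

definition Wd :: "nat set \<Rightarrow> nat set \<Rightarrow> (nat \<Rightarrow> nat) \<Rightarrow> bool list" where
  "Wd A T \<sigma> = map (\<lambda>r. inv_into T \<sigma> r \<in> A) [0..<card T]"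

definition invs :: "nat set \<Rightarrow> nat set \<Rightarrow> (nat \<Rightarrow> nat) \<Rightarrow> nat" where
  "invs A B \<sigma> = card {(i,j). i \<in> A \<and> j \<in> B \<and> \<sigma> i < \<sigma> j}"

lemma finite_BT: "finite T \<Longrightarrow> finite (BT T)"
  by (rule finite_subset[of _ "T \<rightarrow>\<^sub>E {..<card T}"]) (auto simp: BT_def intro: finite_PiE)

context
  fixes A B :: "nat set"
  assumes fA: "finite A" and fB: "finite B" and dAB: "A \<inter> B = {}"
begin

lemma img_A:
  assumes "\<sigma> \<in> BT (A \<union> B)"
  shows "\<sigma> ` A = {r. r < card (A \<union> B) \<and> inv_into (A \<union> B) \<sigma> r \<in> A}"
proof -
  have b: "bij_betw \<sigma> (A \<union> B) {..<card (A \<union> B)}" using assms by (simp add: BT_def)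
  show ?thesis
  proof safe
    fix i assume "i \<in> A"
    then show "\<sigma> i < card (A \<union> B)" using b by (auto simp: bij_betw_def)
    show "inv_into (A \<union> B) \<sigma> (\<sigma> i) \<in> A" using b \<open>i \<in> A\<close>
      by (simp add: bij_betw_def inv_into_f_f)
  next
    fix r assume "r < card (A \<union> B)" "inv_into (A \<union> B) \<sigma> r \<in> A"
    then show "r \<in> \<sigma> ` A" using b
      by (metis bij_betw_inv_into_right imageI lessThan_iff)
  qed
qed

lemma img_B:
  assumes "\<sigma> \<in> BT (A \<union> B)"
  shows "\<sigma> ` B = {r. r < card (A \<union> B) \<and> inv_into (A \<union> B) \<sigma> r \<notin> A}"
proof -
  have b: "bij_betw \<sigma> (A \<union> B) {..<card (A \<union> B)}" using assms by (simp add: BT_def)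
  show ?thesis
  proof safe
    fix i assume "i \<in> B"
    then show "\<sigma> i < card (A \<union> B)" using b by (auto simp: bij_betw_def)
    assume "inv_into (A \<union> B) \<sigma> (\<sigma> i) \<in> A"
    then show False using b \<open>i \<in> B\<close> dAB
      by (auto simp: bij_betw_def inv_into_f_f)
  next
    fix r assume r: "r < card (A \<union> B)" "inv_into (A \<union> B) \<sigma> r \<notin> A"
    have "inv_into (A \<union> B) \<sigma> r \<in> A \<union> B" using b r by (metis bij_betw_def inv_into_into lessThan_iff)
    then have "inv_into (A \<union> B) \<sigma> r \<in> B" using r by auto
    moreover have "\<sigma> (inv_into (A \<union> B) \<sigma> r) = r" using b r by (metis bij_betw_inv_into_right lessThan_iff)
    ultimately show "r \<in> \<sigma> ` B" by (metis imageI)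
  qed
qed

lemma card_AB: "card (A \<union> B) = card A + card B"
  using fA fB dAB by (simp add: card_Un_disjoint)

lemma Wd_words:
  assumes "\<sigma> \<in> BT (A \<union> B)"
  shows "Wd A (A \<union> B) \<sigma> \<in> words (card A) (card B)"
proof -
  have b: "bij_betw \<sigma> (A \<union> B) {..<card (A \<union> B)}" using assms by (simp add: BT_def)
  have injA: "inj_on \<sigma> A" and injB: "inj_on \<sigma> B" using b by (auto simp: bij_betw_def intro: inj_on_subset)
  have "count_list (Wd A (A \<union> B) \<sigma>) True = card {r. r < card (A \<union> B) \<and> inv_into (A \<union> B) \<sigma> r \<in> A}"
    unfolding count_card Wd_def by (intro arg_cong[where f=card]) auto
  also have "\<dots> = card A" using img_A[OF assms] card_image[OF injA] by simp
  finally have 1: "count_list (Wd A (A \<union> B) \<sigma>) True = card A" .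
  have "count_list (Wd A (A \<union> B) \<sigma>) False = card {r. r < card (A \<union> B) \<and> inv_into (A \<union> B) \<sigma> r \<notin> A}"
    unfolding count_card Wd_def by (intro arg_cong[where f=card]) auto
  also have "\<dots> = card B" using img_B[OF assms] card_image[OF injB] by simp
  finally have 2: "count_list (Wd A (A \<union> B) \<sigma>) False = card B" .
  show ?thesis using 1 2 card_AB by (simp add: words_def Wd_def)
qed

lemma Wd_eq_iff:
  assumes "\<sigma> \<in> BT (A \<union> B)"
  shows "Wd A (A \<union> B) \<sigma> = w \<longleftrightarrow> length w = card (A \<union> B) \<and> \<sigma> ` A = {r. r < card (A \<union> B) \<and> w ! r}"
proof -
  let ?m = "card (A \<union> B)"
  have "Wd A (A \<union> B) \<sigma> = w \<longleftrightarrow> length w = ?m \<and> (\<forall>r<?m. (inv_into (A \<union> B) \<sigma> r \<in> A) = w ! r)"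
    unfolding Wd_def list_eq_iff_nth_eq by auto
  also have "(\<forall>r<?m. (inv_into (A \<union> B) \<sigma> r \<in> A) = w ! r) \<longleftrightarrow> {r. r < ?m \<and> inv_into (A \<union> B) \<sigma> r \<in> A} = {r. r < ?m \<and> w ! r}"
    by blast
  finally show ?thesis unfolding img_A[OF assms] .
qed

lemma invs_Wd:
  assumes "\<sigma> \<in> BT (A \<union> B)"
  shows "invw (Wd A (A \<union> B) \<sigma>) = invs A B \<sigma>"
proof -
  have b: "bij_betw \<sigma> (A \<union> B) {..<card (A \<union> B)}" using assms by (simp add: BT_def)
  have inj: "inj_on \<sigma> (A \<union> B)" using b by (simp add: bij_betw_def)
  let ?P = "{(i,j). i \<in> A \<and> j \<in> B \<and> \<sigma> i < \<sigma> j}"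
  let ?f = "\<lambda>(i,j). (\<sigma> i, \<sigma> j)"
  have injf: "inj_on ?f ?P" using inj by (auto simp: inj_on_def)
  have lt: "i \<in> A \<union> B \<Longrightarrow> \<sigma> i < card (A \<union> B)" for i using b by (auto simp: bij_betw_def)
  have invf: "i \<in> A \<union> B \<Longrightarrow> inv_into (A \<union> B) \<sigma> (\<sigma> i) = i" for i using inj by (simp add: inv_into_f_f)
  let ?W = "Wd A (A \<union> B) \<sigma>"
  have img: "?f ` ?P = {(r,s). r < s \<and> s < length ?W \<and> ?W ! r \<and> \<not> ?W ! s}"
  proof (intro equalityI subsetI)
    fix x assume "x \<in> ?f ` ?P"
    then obtain i j where ij: "i \<in> A" "j \<in> B" "\<sigma> i < \<sigma> j" "x = (\<sigma> i, \<sigma> j)" by auto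
    have l: "\<sigma> j < card (A \<union> B)" "\<sigma> i < card (A \<union> B)" using lt ij by auto
    have "?W ! \<sigma> i" using ij l invf by (simp add: Wd_def)
    moreover have "\<not> ?W ! \<sigma> j" using ij l invf dAB by (auto simp: Wd_def)
    ultimately show "x \<in> {(r,s). r < s \<and> s < length ?W \<and> ?W ! r \<and> \<not> ?W ! s}"
      using ij l by (simp add: Wd_def)
  next
    fix x assume "x \<in> {(r,s). r < s \<and> s < length ?W \<and> ?W ! r \<and> \<not> ?W ! s}"
    then obtain r s where rs: "r < s" "s < length ?W" "?W ! r" "\<not> ?W ! s" "x = (r,s)" by auto
    have r: "r < card (A \<union> B)" and s: "s < card (A \<union> B)" using rs by (auto simp: Wd_def)
    let ?i = "inv_into (A \<union> B) \<sigma> r" and ?j = "inv_into (A \<union> B) \<sigma> s"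
    have i: "?i \<in> A" using rs r by (simp add: Wd_def)
    have j1: "?j \<in> A \<union> B" using s b by (metis bij_betw_def inv_into_into lessThan_iff)
    have j2: "?j \<notin> A" using rs s by (simp add: Wd_def)
    have si: "\<sigma> ?i = r" and sj: "\<sigma> ?j = s" using b r s by (metis bij_betw_inv_into_right lessThan_iff)+
    show "x \<in> ?f ` ?P"
      using i j1 j2 si sj rs by (intro image_eqI[of _ _ "(?i, ?j)"]) auto
  qed
  show ?thesis unfolding invs_def invw_def img[symmetric] card_image[OF injf] ..
qed

lemma exists_rho:
  assumes "w \<in> words (card A) (card B)" "w' \<in> words (card A) (card B)"
  shows "\<exists>\<rho>. bij_betw \<rho> {..<card (A \<union> B)} {..<card (A \<union> B)} \<and>
     \<rho> ` {r. r < card (A \<union> B) \<and> w ! r} = {r. r < card (A \<union> B) \<and> w' ! r}"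
proof -
  let ?m = "card (A \<union> B)"
  let ?S = "{r. r < ?m \<and> w ! r}" and ?S' = "{r. r < ?m \<and> w' ! r}"
  let ?C = "{r. r < ?m \<and> \<not> w ! r}" and ?C' = "{r. r < ?m \<and> \<not> w' ! r}"
  have lw: "length w = ?m" "length w' = ?m" using assms card_AB by (auto simp: words_def)
  have "card ?S = card A" using assms(1) lw by (simp add: words_def count_card card_AB)
  moreover have "card ?S' = card A" using assms(2) lw by (simp add: words_def count_card card_AB)
  ultimately obtain g where g: "bij_betw g ?S ?S'" using finite_same_card_bij[of ?S ?S'] by auto
  have "card ?C = card B" using assms(1) lw by (simp add: words_def count_card card_AB)
  moreover have "card ?C' = card B" using assms(2) lw by (simp add: words_def count_card card_AB)
  ultimately obtain h where h: "bij_betw h ?C ?C'" using finite_same_card_bij[of ?C ?C'] by auto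
  define \<rho> where "\<rho> r = (if w ! r then g r else h r)" for r
  have g': "bij_betw \<rho> ?S ?S'" using g by (rule bij_betw_cong[THEN iffD1, rotated]) (auto simp: \<rho>_def)
  have h': "bij_betw \<rho> ?C ?C'" using h by (rule bij_betw_cong[THEN iffD1, rotated]) (auto simp: \<rho>_def)
  have "bij_betw \<rho> (?S \<union> ?C) (?S' \<union> ?C')" by (rule bij_betw_combine[OF g' h']) auto
  moreover have "?S \<union> ?C = {..<?m}" "?S' \<union> ?C' = {..<?m}" by auto
  ultimately show ?thesis using g' by (intro exI[of _ \<rho>]) (auto simp: bij_betw_def)
qed

lemma fiber_le:
  assumes "w \<in> words (card A) (card B)" "w' \<in> words (card A) (card B)"
  shows "card {\<sigma> \<in> BT (A \<union> B). Wd A (A \<union> B) \<sigma> = w} \<le> card {\<sigma> \<in> BT (A \<union> B). Wd A (A \<union> B) \<sigma> = w'}"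
proof -
  let ?T = "A \<union> B" let ?m = "card (A \<union> B)"
  obtain \<rho> where rho: "bij_betw \<rho> {..<?m} {..<?m}" "\<rho> ` {r. r < ?m \<and> w ! r} = {r. r < ?m \<and> w' ! r}"
    using exists_rho[OF assms] by blast
  define f where "f \<sigma> = restrict (\<rho> \<circ> \<sigma>) ?T" for \<sigma>
  have lw: "length w' = ?m" using assms card_AB by (auto simp: words_def)
  show ?thesis
  proof (rule card_inj_on_le)
    show "finite {\<sigma> \<in> BT ?T. Wd A ?T \<sigma> = w'}" using finite_BT fA fB by auto
    show "inj_on f {\<sigma> \<in> BT ?T. Wd A ?T \<sigma> = w}"
    proof (rule inj_onI)
      fix \<sigma> \<tau> assume s: "\<sigma> \<in> {\<sigma> \<in> BT ?T. Wd A ?T \<sigma> = w}" and t: "\<tau> \<in> {\<sigma> \<in> BT ?T. Wd A ?T \<sigma> = w}"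
        and e: "f \<sigma> = f \<tau>"
      show "\<sigma> = \<tau>"
      proof (rule extensionalityI)
        show "\<sigma> \<in> extensional ?T" "\<tau> \<in> extensional ?T" using s t by (auto simp: BT_def PiE_def)
        fix i assume i: "i \<in> ?T"
        have "\<rho> (\<sigma> i) = \<rho> (\<tau> i)" using e i by (metis comp_apply f_def restrict_apply')
        moreover have "\<sigma> i \<in> {..<?m}" "\<tau> i \<in> {..<?m}" using s t i by (auto simp: BT_def bij_betw_def)
        ultimately show "\<sigma> i = \<tau> i" using rho(1) by (auto simp: bij_betw_def inj_on_def)
      qed
    qed
    show "f ` {\<sigma> \<in> BT ?T. Wd A ?T \<sigma> = w} \<subseteq> {\<sigma> \<in> BT ?T. Wd A ?T \<sigma> = w'}"
    proof (rule image_subsetI)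
      fix \<sigma> assume "\<sigma> \<in> {\<sigma> \<in> BT ?T. Wd A ?T \<sigma> = w}"
      then have s: "\<sigma> \<in> BT ?T" and ws: "Wd A ?T \<sigma> = w" by auto
      have b: "bij_betw \<sigma> ?T {..<?m}" using s by (simp add: BT_def)
      have bf: "bij_betw (f \<sigma>) ?T {..<?m}"
        using bij_betw_trans[OF b rho(1)] by (rule bij_betw_cong[THEN iffD1, rotated]) (auto simp: f_def)
      then have fs: "f \<sigma> \<in> BT ?T" by (auto simp: BT_def f_def bij_betw_def)
      have "f \<sigma> ` A = \<rho> ` (\<sigma> ` A)" by (auto simp: f_def image_comp)
      also have "\<sigma> ` A = {r. r < ?m \<and> w ! r}" using Wd_eq_iff[OF s] ws by blast
      finally have "Wd A ?T (f \<sigma>) = w'" using Wd_eq_iff[OF fs] rho(2) lw by simp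
      then show "f \<sigma> \<in> {\<sigma> \<in> BT ?T. Wd A ?T \<sigma> = w'}" using fs by simp
    qed
  qed
qed

lemma fiber_eq:
  assumes "w \<in> words (card A) (card B)" "w' \<in> words (card A) (card B)"
  shows "card {\<sigma> \<in> BT (A \<union> B). Wd A (A \<union> B) \<sigma> = w} = card {\<sigma> \<in> BT (A \<union> B). Wd A (A \<union> B) \<sigma> = w'}"
  using fiber_le[OF assms] fiber_le[OF assms(2,1)] by simp

lemma card_by_fibers:
  assumes "finite X" "g ` X \<subseteq> Y" "finite Y"
  shows "card {x \<in> X. P (g x)} = (\<Sum>y\<in>{y \<in> Y. P y}. card {x \<in> X. g x = y})"
proof -
  have "card {x \<in> X. P (g x)} = (\<Sum>x\<in>{x \<in> X. P (g x)}. 1)" by simp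
  also have "\<dots> = (\<Sum>y\<in>{y \<in> Y. P y}. \<Sum>x\<in>{x \<in> {x \<in> X. P (g x)}. g x = y}. 1)"
    by (rule sum.group[symmetric]) (use assms in auto)
  also have "\<dots> = (\<Sum>y\<in>{y \<in> Y. P y}. card {x \<in> X. g x = y})"
    by (intro sum.cong refl) (auto intro: arg_cong[where f=card])
  finally show ?thesis .
qed

lemma finite_words: "finite (words a b)"
proof -
  have "finite {w. set w \<subseteq> (UNIV::bool set) \<and> length w = a + b}" by (rule finite_lists_length_eq) simp
  then show ?thesis by (rule finite_subset[rotated]) (auto simp: words_def)
qed

lemma count_sigma:
  "card {\<sigma> \<in> BT (A \<union> B). invs A B \<sigma> = n} * card (words (card A) (card B))
   = card (BT (A \<union> B)) * card {w \<in> words (card A) (card B). invw w = n}"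
proof -
  let ?T = "A \<union> B" let ?Wo = "words (card A) (card B)"
  have fin: "finite (BT ?T)" using finite_BT fA fB by auto
  have sub: "Wd A ?T ` BT ?T \<subseteq> ?Wo" using Wd_words by auto
  have eq1: "{\<sigma> \<in> BT ?T. invs A B \<sigma> = n} = {\<sigma> \<in> BT ?T. invw (Wd A ?T \<sigma>) = n}"
    using invs_Wd by auto
  show ?thesis
  proof (cases "?Wo = {}")
    case True
    then show ?thesis using sub by simp
  next
    case False
    then obtain w0 where w0: "w0 \<in> ?Wo" by auto
    define c where "c = card {\<sigma> \<in> BT ?T. Wd A ?T \<sigma> = w0}"
    have fc: "w \<in> ?Wo \<Longrightarrow> card {\<sigma> \<in> BT ?T. Wd A ?T \<sigma> = w} = c" for w
      using fiber_eq[OF _ w0] c_def by simp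
    have "card {\<sigma> \<in> BT ?T. invs A B \<sigma> = n} = (\<Sum>w\<in>{w \<in> ?Wo. invw w = n}. card {\<sigma> \<in> BT ?T. Wd A ?T \<sigma> = w})"
      unfolding eq1 by (rule card_by_fibers[OF fin sub finite_words])
    also have "\<dots> = card {w \<in> ?Wo. invw w = n} * c" by (simp add: fc)
    finally have 1: "card {\<sigma> \<in> BT ?T. invs A B \<sigma> = n} = card {w \<in> ?Wo. invw w = n} * c" .
    have "card (BT ?T) = card {\<sigma> \<in> BT ?T. True}" by simp
    also have "\<dots> = (\<Sum>w\<in>{w \<in> ?Wo. True}. card {\<sigma> \<in> BT ?T. Wd A ?T \<sigma> = w})"
      by (rule card_by_fibers[OF fin sub finite_words])
    also have "\<dots> = card ?Wo * c" by (simp add: fc)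
    finally have 2: "card (BT ?T) = card ?Wo * c" .
    show ?thesis unfolding 1 2 by simp
  qed
qed

end

lemma card_words: "card (words a b) = (a + b) choose a"
proof -
  let ?F = "\<lambda>w. {r. r < length w \<and> w ! r}"
  let ?G = "\<lambda>S. map (\<lambda>r. r \<in> S) [0..<a+b]"
  have "bij_betw ?F (words a b) {S. S \<subseteq> {..<a+b} \<and> card S = a}"
  proof (rule bij_betw_byWitness[where f'="?G"])
    show "\<forall>w\<in>words a b. ?G (?F w) = w" by (auto simp: words_def list_eq_iff_nth_eq)
    show "\<forall>S\<in>{S. S \<subseteq> {..<a + b} \<and> card S = a}. ?F (?G S) = S" by auto
    show "?F ` words a b \<subseteq> {S. S \<subseteq> {..<a + b} \<and> card S = a}"
      by (auto simp: words_def count_card)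
    show "?G ` {S. S \<subseteq> {..<a + b} \<and> card S = a} \<subseteq> words a b"
    proof (rule image_subsetI)
      fix S assume "S \<in> {S. S \<subseteq> {..<a + b} \<and> card S = a}"
      then have S: "S \<subseteq> {..<a+b}" "card S = a" by auto
      have "count_list (?G S) True = card S"
        unfolding count_card using S(1) by (intro arg_cong[where f=card]) auto
      moreover have "count_list (?G S) False = card ({..<a+b} - S)"
        unfolding count_card using S(1) by (intro arg_cong[where f=card]) auto
      moreover have "card ({..<a+b} - S) = b" using S by (simp add: card_Diff_subset finite_subset)
      ultimately show "?G S \<in> words a b" using S by (simp add: words_def)
    qed
  qed
  then have "card (words a b) = card {S. S \<subseteq> {..<a+b} \<and> card S = a}" by (rule bij_betw_same_card)
  also have "\<dots> = (a + b) choose a" by (simp add: n_subsets)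
  finally show ?thesis .
qed


definition rkf :: "nat set \<Rightarrow> (nat \<Rightarrow> real) \<Rightarrow> nat \<Rightarrow> nat" where
  "rkf T p = (\<lambda>i\<in>T. card {j \<in> T. p i < p j})"

definition antim :: "nat set \<Rightarrow> (nat \<Rightarrow> real) \<Rightarrow> (nat \<Rightarrow> nat) \<Rightarrow> bool" where
  "antim T p \<sigma> \<longleftrightarrow> (\<forall>i\<in>T. \<forall>j\<in>T. \<sigma> i < \<sigma> j \<longrightarrow> p j < p i)"

lemma rkf_lt:
  assumes "finite T" "i \<in> T" "j \<in> T" "p i < p j"
  shows "rkf T p j < rkf T p i"
proof -
  have "{l \<in> T. p j < p l} \<subset> {l \<in> T. p i < p l}"
    using assms by auto
  then show ?thesis using assms by (simp add: rkf_def psubset_card_mono)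
qed

lemma rkf_BT:
  assumes fT: "finite T" and inj: "inj_on p T"
  shows "rkf T p \<in> BT T" "antim T p (rkf T p)"
proof -
  have ne: "i \<in> T \<Longrightarrow> j \<in> T \<Longrightarrow> i \<noteq> j \<Longrightarrow> p i < p j \<or> p j < p i" for i j
    using inj by (metis inj_onD linorder_neqE_linordered_idom)
  have injr: "inj_on (rkf T p) T"
  proof (rule inj_onI)
    fix i j assume "i \<in> T" "j \<in> T" "rkf T p i = rkf T p j"
    then show "i = j" using ne[of i j] rkf_lt[OF fT, of i j p] rkf_lt[OF fT, of j i p] by auto
  qed
  have lt: "rkf T p i < card T" if "i \<in> T" for i
  proof -
    have "{j \<in> T. p i < p j} \<subset> T" using that by auto
    then show ?thesis using that fT by (simp add: rkf_def psubset_card_mono)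
  qed
  have sub: "rkf T p ` T \<subseteq> {..<card T}" using lt by auto
  have "card (rkf T p ` T) = card {..<card T}" using card_image[OF injr] by simp
  then have "rkf T p ` T = {..<card T}" using sub by (intro card_subset_eq) auto
  then have "bij_betw (rkf T p) T {..<card T}" using injr by (simp add: bij_betw_def)
  moreover have "rkf T p \<in> T \<rightarrow>\<^sub>E {..<card T}" using lt by (auto simp: rkf_def)
  ultimately show "rkf T p \<in> BT T" by (simp add: BT_def)
  show "antim T p (rkf T p)"
    unfolding antim_def
  proof (intro ballI impI)
    fix i j assume ij: "i \<in> T" "j \<in> T" "rkf T p i < rkf T p j"
    then have "i \<noteq> j" by auto
    then show "p j < p i" using ne[OF ij(1,2)] rkf_lt[OF fT ij(1,2), of p] ij(3) by auto
  qed
qed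

lemma BT_rank:
  assumes fT: "finite T" and s: "\<sigma> \<in> BT T" and i: "i \<in> T"
  shows "\<sigma> i = card {j \<in> T. \<sigma> j < \<sigma> i}"
proof -
  have b: "bij_betw \<sigma> T {..<card T}" using s by (simp add: BT_def)
  have "\<sigma> ` {j \<in> T. \<sigma> j < \<sigma> i} = {..<\<sigma> i}"
  proof (intro equalityI subsetI)
    fix x assume "x \<in> \<sigma> ` {j \<in> T. \<sigma> j < \<sigma> i}" then show "x \<in> {..<\<sigma> i}" by auto
  next
    fix x assume x: "x \<in> {..<\<sigma> i}"
    have "\<sigma> i < card T" using b i by (auto simp: bij_betw_def)
    then have "x \<in> \<sigma> ` T" using x b by (auto simp: bij_betw_def)
    then show "x \<in> \<sigma> ` {j \<in> T. \<sigma> j < \<sigma> i}" using x by auto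
  qed
  moreover have "inj_on \<sigma> {j \<in> T. \<sigma> j < \<sigma> i}" using b by (auto simp: bij_betw_def intro: inj_on_subset)
  ultimately show ?thesis by (metis card_image card_lessThan)
qed

lemma antim_unique:
  assumes fT: "finite T" and inj: "inj_on p T" and s: "\<sigma> \<in> BT T" and a: "antim T p \<sigma>"
  shows "\<sigma> = rkf T p"
proof (rule extensionalityI)
  show "\<sigma> \<in> extensional T" using s by (auto simp: BT_def PiE_def)
  show "rkf T p \<in> extensional T" by (simp add: rkf_def)
  fix i assume i: "i \<in> T"
  have injs: "inj_on \<sigma> T" using s by (simp add: BT_def bij_betw_def)
  have "{j \<in> T. \<sigma> j < \<sigma> i} = {j \<in> T. p i < p j}"
  proof (intro Collect_cong conj_cong refl)
    fix j assume j: "j \<in> T"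
    show "\<sigma> j < \<sigma> i \<longleftrightarrow> p i < p j"
    proof
      assume "\<sigma> j < \<sigma> i" then show "p i < p j" using a i j by (auto simp: antim_def)
    next
      assume pij: "p i < p j"
      then have "i \<noteq> j" by auto
      then have "\<sigma> i \<noteq> \<sigma> j" using injs i j by (auto simp: inj_on_def)
      moreover have "\<not> \<sigma> i < \<sigma> j"
      proof
        assume "\<sigma> i < \<sigma> j" then have "p j < p i" using a i j by (auto simp: antim_def)
        then show False using pij by simp
      qed
      ultimately show "\<sigma> j < \<sigma> i" by auto
    qed
  qed
  then show "\<sigma> i = rkf T p i" using BT_rank[OF fT s i] i by (simp add: rkf_def)
qed

definition fo :: "(nat \<Rightarrow> real) \<Rightarrow> nat \<Rightarrow> bool" where
  "fo U i \<longleftrightarrow> (\<forall>i'<i. U i' \<noteq> U i)"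

lemma Least_le': "(LEAST i'. U i' = U i) \<le> (i::nat)" by (rule Least_le) simp

lemma Least_val: "U (LEAST i'. U i' = U (i::nat)) = U i" by (rule LeastI) simp

lemma fo_Least: "fo U (LEAST i'. U i' = U i)"
  unfolding fo_def
proof (intro allI impI)
  fix i' assume "i' < (LEAST i'. U i' = U i)"
  then have "U i' \<noteq> U i" by (rule not_less_Least)
  then show "U i' \<noteq> U (LEAST i'. U i' = U i)" using Least_val[of U i] by simp
qed

lemma fo_inj: "fo U i \<Longrightarrow> fo U j \<Longrightarrow> U i = U j \<Longrightarrow> i = j"
  by (metis fo_def linorder_neqE_nat)

lemma card_img_L:
  "card (U ` {..<k} \<inter> L) = card {i. i < k \<and> U i \<in> L \<and> fo U i}"
proof -
  let ?F = "{i. i < k \<and> U i \<in> L \<and> fo U i}"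
  have "U ` ?F = U ` {..<k} \<inter> L"
  proof (intro equalityI subsetI)
    fix x assume "x \<in> U ` {..<k} \<inter> L"
    then obtain i where i: "i < k" "U i \<in> L" "x = U i" by auto
    let ?i = "LEAST i'. U i' = U i"
    have "?i \<in> ?F" using i Least_le'[of U i] Least_val[of U i] fo_Least[of U i] by auto
    then show "x \<in> U ` ?F" using i Least_val[of U i] by (metis image_eqI)
  qed auto
  moreover have "inj_on U ?F"
    by (rule inj_onI) (use fo_inj in auto)
  ultimately show ?thesis by (metis card_image)
qed

lemma card_img_pairs:
  "card {(x,y). x \<in> U ` {..<k} \<and> y \<in> U ` {..<k} \<and> C x y} =
   card {(i,j). i < k \<and> j < k \<and> C (U i) (U j) \<and> fo U i \<and> fo U j}"
proof -
  let ?F = "{(i,j). i < k \<and> j < k \<and> C (U i) (U j) \<and> fo U i \<and> fo U j}"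
  let ?g = "\<lambda>(i,j). (U i, U j)"
  have eq: "?g ` ?F = {(x,y). x \<in> U ` {..<k} \<and> y \<in> U ` {..<k} \<and> C x y}"
  proof (intro equalityI subsetI)
    fix z assume "z \<in> {(x,y). x \<in> U ` {..<k} \<and> y \<in> U ` {..<k} \<and> C x y}"
    then obtain i j where ij: "i < k" "j < k" "C (U i) (U j)" "z = (U i, U j)" by auto
    let ?i = "LEAST i'. U i' = U i" and ?j = "LEAST i'. U i' = U j"
    have vi: "U ?i = U i" and vj: "U ?j = U j" by (rule Least_val)+
    have li: "?i < k" using Least_le'[of U i] ij(1) by linarith
    have lj: "?j < k" using Least_le'[of U j] ij(2) by linarith
    have "(?i, ?j) \<in> ?F" using li lj fo_Least[of U i] fo_Least[of U j] ij(3)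
      by (simp add: vi vj)
    moreover have "z = ?g (?i, ?j)" using ij(4) vi vj by simp
    ultimately show "z \<in> ?g ` ?F" by blast
  qed auto
  have inj: "inj_on ?g ?F"
  proof (rule inj_onI)
    fix x y assume "x \<in> ?F" "y \<in> ?F" "?g x = ?g y"
    moreover obtain i j where x: "x = (i,j)" by (cases x)
    moreover obtain i' j' where y: "y = (i',j')" by (cases y)
    ultimately have "fo U i" "fo U i'" "U i = U i'" "fo U j" "fo U j'" "U j = U j'" by auto
    then have "i = i'" "j = j'" using fo_inj by blast+
    then show "x = y" using x y by simp
  qed
  show ?thesis using card_image[OF inj] unfolding eq by simp
qed

lemma card_pred_measurable:
  assumes "finite I" and Q: "\<And>i. i \<in> I \<Longrightarrow> Measurable.pred M (Q i)"
  shows "Measurable.pred M (\<lambda>x. card {i \<in> I. Q i x} = c)"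
proof -
  let ?J = "{J. J \<subseteq> I \<and> card J = c}"
  have eq: "{x \<in> space M. card {i \<in> I. Q i x} = c} = (\<Union>J\<in>?J. {x \<in> space M. \<forall>i\<in>I. Q i x \<longleftrightarrow> i \<in> J})"
  proof (intro equalityI subsetI)
    fix x assume "x \<in> {x \<in> space M. card {i \<in> I. Q i x} = c}"
    then show "x \<in> (\<Union>J\<in>?J. {x \<in> space M. \<forall>i\<in>I. Q i x \<longleftrightarrow> i \<in> J})"
      by (intro UN_I[of "{i \<in> I. Q i x}"]) auto
  next
    fix x assume "x \<in> (\<Union>J\<in>?J. {x \<in> space M. \<forall>i\<in>I. Q i x \<longleftrightarrow> i \<in> J})"
    then obtain J where J: "J \<subseteq> I" "card J = c" "x \<in> space M" "\<forall>i\<in>I. Q i x \<longleftrightarrow> i \<in> J" by auto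
    then have "{i \<in> I. Q i x} = J" by auto
    then show "x \<in> {x \<in> space M. card {i \<in> I. Q i x} = c}" using J by auto
  qed
  have fin: "finite ?J" using assms(1) by auto
  have "(\<Union>J\<in>?J. {x \<in> space M. \<forall>i\<in>I. Q i x \<longleftrightarrow> i \<in> J}) \<in> sets M"
  proof (rule sets.finite_UN[OF fin])
    fix J assume "J \<in> ?J"
    have "Measurable.pred M (\<lambda>x. \<forall>i\<in>I. Q i x \<longleftrightarrow> i \<in> J)"
      using assms by measurable
    then show "{x \<in> space M. \<forall>i\<in>I. Q i x \<longleftrightarrow> i \<in> J} \<in> sets M" by (simp add: pred_def)
  qed
  then show ?thesis unfolding pred_def eq .
qed


definition qv :: "real \<Rightarrow> real \<Rightarrow> real" where
  "qv r0 x = (if x \<in> lens2 r0 then x - r0 else x)"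

lemma qv_meas[measurable]: "qv r0 \<in> borel_measurable borel"
  unfolding qv_def lens2_def by measurable

definition EAB :: "real \<Rightarrow> nat \<Rightarrow> nat set \<Rightarrow> nat set \<Rightarrow> (nat \<Rightarrow> real) set" where
  "EAB r0 k A B = {U. \<forall>l\<in>{..<k}. (U l \<in> lens1 r0 \<longleftrightarrow> l \<in> A) \<and> (U l \<in> lens2 r0 \<longleftrightarrow> l \<in> B)}"

definition Rk :: "real \<Rightarrow> nat set \<Rightarrow> (nat \<Rightarrow> nat) \<Rightarrow> (nat \<Rightarrow> real) set" where
  "Rk r0 T \<sigma> = {U. \<forall>i\<in>T. \<forall>j\<in>T. \<sigma> i < \<sigma> j \<longrightarrow> qv r0 (U j) < qv r0 (U i)}"

definition Gd :: "real \<Rightarrow> nat \<Rightarrow> (nat \<Rightarrow> real) set" where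
  "Gd r0 k = {U. \<forall>i<k. \<forall>j<k. i \<noteq> j \<longrightarrow> U i \<in> lens1 r0 \<union> lens2 r0 \<longrightarrow> U j \<in> lens1 r0 \<union> lens2 r0
      \<longrightarrow> qv r0 (U i) \<noteq> qv r0 (U j)}"

lemma Rk_antim: "U \<in> Rk r0 T \<sigma> \<longleftrightarrow> antim T (\<lambda>l. qv r0 (U l)) \<sigma>"
  by (simp add: Rk_def antim_def)

context
  fixes r0 :: real
  assumes r1: "1/3 < r0" and r2: "r0 < 1/2"
begin

lemma lens_disj: "x \<in> lens1 r0 \<Longrightarrow> x \<notin> lens2 r0"
  using r1 r2 by (auto simp: lens1_def lens2_def)

lemma sigma3_eq:
  "sigma3 r0 P = card {(x,y). x \<in> P \<and> y \<in> P \<and> x \<in> lens1 r0 \<and> y \<in> lens2 r0 \<and> y - x < r0}"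
proof -
  let ?S2 = "{(x,y). x \<in> P \<and> y \<in> P \<and> x \<in> lens1 r0 \<and> y \<in> lens2 r0 \<and> y - x < r0}"
  let ?S4 = "{(v0, v1, v2, v3). v0 = 0 \<and> v3 = 1 \<and>
      v0 \<in> vert P \<and> v1 \<in> vert P \<and> v2 \<in> vert P \<and> v3 \<in> vert P \<and>
      adj r0 v0 v1 \<and> adj r0 v1 v2 \<and> adj r0 v2 v3}"
  let ?f = "\<lambda>(x::real,y::real). (0::real, x, y, 1::real)"
  have eq: "?S4 = ?f ` ?S2"
  proof (intro equalityI subsetI)
    fix t assume "t \<in> ?S4"
    then obtain v1 v2 where t: "t = (0, v1, v2, 1)" "v1 \<in> vert P" "v2 \<in> vert P"
      "adj r0 0 v1" "adj r0 v1 v2" "adj r0 v2 1" by auto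
    have a: "v1 \<noteq> 0" "\<bar>v1\<bar> < r0" "v1 \<noteq> v2" "\<bar>v1 - v2\<bar> < r0" "v2 \<noteq> 1" "\<bar>v2 - 1\<bar> < r0"
      using t(4,5,6) by (auto simp: adj_def)
    have v1P: "v1 \<in> P" using t(2) a r2 by (auto simp: vert_def)
    have v2P: "v2 \<in> P" using t(3) a r2 by (auto simp: vert_def)
    have "v1 \<in> lens1 r0" "v2 \<in> lens2 r0" "v2 - v1 < r0"
      using a r1 r2 by (auto simp: lens1_def lens2_def abs_less_iff)
    then show "t \<in> ?f ` ?S2" using v1P v2P t(1) by (intro image_eqI[of _ _ "(v1, v2)"]) auto
  next
    fix t assume "t \<in> ?f ` ?S2"
    then obtain x y where t: "t = (0, x, y, 1)" "x \<in> P" "y \<in> P" "x \<in> lens1 r0" "y \<in> lens2 r0" "y - x < r0"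
      by auto
    then show "t \<in> ?S4" using r1 r2
      by (auto simp: vert_def adj_def lens1_def lens2_def abs_less_iff)
  qed
  have inj: "inj_on ?f ?S2" by (auto simp: inj_on_def)
  show ?thesis unfolding sigma3_def eq card_image[OF inj] ..
qed

lemma inj_lens:
  assumes U: "U \<in> Gd r0 k" and A: "A \<subseteq> {..<k}" and L: "\<And>l. l \<in> A \<Longrightarrow> U l \<in> lens1 r0 \<union> lens2 r0"
  shows "inj_on (\<lambda>l. qv r0 (U l)) A"
  using U A L by (auto simp: Gd_def inj_on_def subset_eq)

lemma inj_lens_U:
  assumes U: "U \<in> Gd r0 k" and A: "A \<subseteq> {..<k}" and L: "\<And>l. l \<in> A \<Longrightarrow> U l \<in> lens1 r0 \<union> lens2 r0"
  shows "inj_on U A"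
  using inj_lens[OF assms] by (auto simp: inj_on_def)

context
  fixes k :: nat and A B :: "nat set" and U :: "nat \<Rightarrow> real"
  assumes A: "A \<subseteq> {..<k}" and B: "B \<subseteq> {..<k}" and dAB: "A \<inter> B = {}"
    and UG: "U \<in> Gd r0 k" and UE: "U \<in> EAB r0 k A B"
begin

lemma inA: "l \<in> A \<Longrightarrow> U l \<in> lens1 r0" using UE A by (auto simp: EAB_def)
lemma inB: "l \<in> B \<Longrightarrow> U l \<in> lens2 r0" using UE B by (auto simp: EAB_def)

lemma count1: "card (U ` {..<k} \<inter> lens1 r0) = card A"
proof -
  have "U ` {..<k} \<inter> lens1 r0 = U ` A" using UE A by (auto simp: EAB_def)
  moreover have "inj_on U A" using inj_lens_U[OF UG A] inA by auto
  ultimately show ?thesis by (simp add: card_image)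
qed

lemma count2: "card (U ` {..<k} \<inter> lens2 r0) = card B"
proof -
  have "U ` {..<k} \<inter> lens2 r0 = U ` B" using UE B by (auto simp: EAB_def)
  moreover have "inj_on U B" using inj_lens_U[OF UG B] inB by auto
  ultimately show ?thesis by (simp add: card_image)
qed

lemma sig_eq: "sigma3 r0 (U ` {..<k}) = card {(i,j). i \<in> A \<and> j \<in> B \<and> qv r0 (U j) < qv r0 (U i)}"
proof -
  let ?P = "{(i,j). i \<in> A \<and> j \<in> B \<and> qv r0 (U j) < qv r0 (U i)}"
  let ?g = "\<lambda>(i,j). (U i, U j)"
  have qA: "i \<in> A \<Longrightarrow> qv r0 (U i) = U i" for i using inA lens_disj by (auto simp: qv_def)
  have qB: "j \<in> B \<Longrightarrow> qv r0 (U j) = U j - r0" for j using inB by (auto simp: qv_def)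
  have eq: "{(x,y). x \<in> U ` {..<k} \<and> y \<in> U ` {..<k} \<and> x \<in> lens1 r0 \<and> y \<in> lens2 r0 \<and> y - x < r0} = ?g ` ?P"
  proof (intro equalityI subsetI)
    fix z assume "z \<in> {(x,y). x \<in> U ` {..<k} \<and> y \<in> U ` {..<k} \<and> x \<in> lens1 r0 \<and> y \<in> lens2 r0 \<and> y - x < r0}"
    then obtain i j where ij: "i < k" "j < k" "U i \<in> lens1 r0" "U j \<in> lens2 r0" "U j - U i < r0" "z = (U i, U j)"
      by auto
    have "i \<in> A" "j \<in> B" using ij UE by (auto simp: EAB_def)
    then show "z \<in> ?g ` ?P" using ij qA qB by (intro image_eqI[of _ _ "(i,j)"]) auto
  next
    fix z assume "z \<in> ?g ` ?P"
    then obtain i j where ij: "i \<in> A" "j \<in> B" "qv r0 (U j) < qv r0 (U i)" "z = (U i, U j)" by auto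
    then show "z \<in> {(x,y). x \<in> U ` {..<k} \<and> y \<in> U ` {..<k} \<and> x \<in> lens1 r0 \<and> y \<in> lens2 r0 \<and> y - x < r0}"
      using A B inA inB qA qB by auto
  qed
  have injA: "inj_on U A" using inj_lens_U[OF UG A] inA by auto
  have injB: "inj_on U B" using inj_lens_U[OF UG B] inB by auto
  have inj: "inj_on ?g ?P"
  proof (rule inj_onI)
    fix x y assume xy: "x \<in> ?P" "y \<in> ?P" "?g x = ?g y"
    obtain i j where x: "x = (i,j)" by (cases x)
    obtain i' j' where y: "y = (i',j')" by (cases y)
    have "i = i'" using xy x y injA by (auto simp: inj_on_def)
    moreover have "j = j'" using xy x y injB by (auto simp: inj_on_def)
    ultimately show "x = y" using x y by simp
  qed
  show ?thesis unfolding sigma3_eq eq card_image[OF inj] ..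
qed

lemma injT: "inj_on (\<lambda>l. qv r0 (U l)) (A \<union> B)"
  by (rule inj_lens[OF UG]) (use A B inA inB in auto)

lemma finT: "finite (A \<union> B)" using A B finite_subset by auto

lemma rank_ex: "rkf (A \<union> B) (\<lambda>l. qv r0 (U l)) \<in> BT (A \<union> B)" "U \<in> Rk r0 (A \<union> B) (rkf (A \<union> B) (\<lambda>l. qv r0 (U l)))"
  using rkf_BT[OF finT injT] by (auto simp: Rk_antim)

lemma rank_unique: "\<sigma> \<in> BT (A \<union> B) \<Longrightarrow> U \<in> Rk r0 (A \<union> B) \<sigma> \<Longrightarrow> \<sigma> = rkf (A \<union> B) (\<lambda>l. qv r0 (U l))"
  using antim_unique[OF finT injT] by (auto simp: Rk_antim)

lemma inv_eq:
  assumes s: "\<sigma> \<in> BT (A \<union> B)" and R: "U \<in> Rk r0 (A \<union> B) \<sigma>"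
  shows "card {(i,j). i \<in> A \<and> j \<in> B \<and> qv r0 (U j) < qv r0 (U i)} = invs A B \<sigma>"
proof -
  have injs: "inj_on \<sigma> (A \<union> B)" using s by (simp add: BT_def bij_betw_def)
  have "{(i,j). i \<in> A \<and> j \<in> B \<and> qv r0 (U j) < qv r0 (U i)} = {(i,j). i \<in> A \<and> j \<in> B \<and> \<sigma> i < \<sigma> j}"
  proof (intro equalityI subsetI)
    fix x assume "x \<in> {(i,j). i \<in> A \<and> j \<in> B \<and> \<sigma> i < \<sigma> j}"
    then show "x \<in> {(i,j). i \<in> A \<and> j \<in> B \<and> qv r0 (U j) < qv r0 (U i)}" using R by (auto simp: Rk_def)
  next
    fix x assume "x \<in> {(i,j). i \<in> A \<and> j \<in> B \<and> qv r0 (U j) < qv r0 (U i)}"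
    then obtain i j where ij: "x = (i,j)" "i \<in> A" "j \<in> B" "qv r0 (U j) < qv r0 (U i)" by auto
    have "i \<noteq> j" using ij dAB by auto
    then have "\<sigma> i \<noteq> \<sigma> j" using injs ij by (auto simp: inj_on_def)
    moreover have "\<not> \<sigma> j < \<sigma> i"
    proof
      assume "\<sigma> j < \<sigma> i" then have "qv r0 (U i) < qv r0 (U j)" using R ij by (auto simp: Rk_def)
      then show False using ij by simp
    qed
    ultimately show "x \<in> {(i,j). i \<in> A \<and> j \<in> B \<and> \<sigma> i < \<sigma> j}" using ij by auto
  qed
  then show ?thesis by (simp add: invs_def)
qed

end

end


lemma space_Mu[simp]: "space Mu = UNIV"
  by (simp add: space_PiM)

lemma sets_EAB[measurable]: "EAB r0 k A B \<in> sets Mu"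
proof -
  have "{U \<in> space Mu. \<forall>l\<in>{..<k}. (U l \<in> lens1 r0 \<longleftrightarrow> l \<in> A) \<and> (U l \<in> lens2 r0 \<longleftrightarrow> l \<in> B)} \<in> sets Mu"
    unfolding lens1_def lens2_def by measurable
  then show ?thesis by (simp add: EAB_def)
qed

lemma sets_Rk[measurable]: "finite T \<Longrightarrow> Rk r0 T \<sigma> \<in> sets Mu"
proof -
  assume [simp]: "finite T"
  have "{U \<in> space Mu. \<forall>i\<in>T. \<forall>j\<in>T. \<sigma> i < \<sigma> j \<longrightarrow> qv r0 (U j) < qv r0 (U i)} \<in> sets Mu"
    by measurable
  then show ?thesis by (simp add: Rk_def)
qed

lemma sets_Gd[measurable]: "Gd r0 k \<in> sets Mu"
proof -
  have "{U \<in> space Mu. \<forall>i\<in>{..<k}. \<forall>j\<in>{..<k}. i \<noteq> j \<longrightarrow> U i \<in> lens1 r0 \<union> lens2 r0 \<longrightarrow> U j \<in> lens1 r0 \<union> lens2 r0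
      \<longrightarrow> (qv r0 (U i) < qv r0 (U j) \<or> qv r0 (U j) < qv r0 (U i))} \<in> sets Mu"
    unfolding lens1_def lens2_def by measurable
  moreover have "Gd r0 k = {U \<in> space Mu. \<forall>i\<in>{..<k}. \<forall>j\<in>{..<k}. i \<noteq> j \<longrightarrow> U i \<in> lens1 r0 \<union> lens2 r0 \<longrightarrow> U j \<in> lens1 r0 \<union> lens2 r0
      \<longrightarrow> (qv r0 (U i) < qv r0 (U j) \<or> qv r0 (U j) < qv r0 (U i))}"
    unfolding Gd_def by (auto simp: linorder_neq_iff)
  ultimately show ?thesis by simp
qed

lemma AE_shift: "i \<noteq> j \<Longrightarrow> AE U in Mu. U j \<noteq> U i + t"
proof -
  assume ij: "i \<noteq> j"
  have m: "{U \<in> space Mu. U j = U i + t} \<in> sets Mu" by measurable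
  show ?thesis
    by (rule AE_I'[of "{U \<in> space Mu. U j = U i + t}"]) (use m null_shift[OF ij] in auto)
qed

context
  fixes r0 :: real
  assumes r1: "1/3 < r0" and r2: "r0 < 1/2"
begin

lemma AE_Gd: "AE U in Mu. U \<in> Gd r0 k"
proof -
  have "AE U in Mu. \<forall>p\<in>{..<k}\<times>{..<k}. fst p \<noteq> snd p \<longrightarrow>
      (U (snd p) \<noteq> U (fst p) + 0 \<and> U (snd p) \<noteq> U (fst p) + r0 \<and> U (snd p) \<noteq> U (fst p) + (-r0))"
  proof (rule AE_finite_allI)
    fix p :: "nat \<times> nat"
    show "AE U in Mu. fst p \<noteq> snd p \<longrightarrow>
      (U (snd p) \<noteq> U (fst p) + 0 \<and> U (snd p) \<noteq> U (fst p) + r0 \<and> U (snd p) \<noteq> U (fst p) + (-r0))"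
    proof (cases "fst p = snd p")
      case False
      then show ?thesis using AE_shift[OF False, of 0] AE_shift[OF False, of r0] AE_shift[OF False, of "-r0"]
        by eventually_elim auto
    qed simp
  qed simp
  then show ?thesis
  proof eventually_elim
    case (elim U)
    show "U \<in> Gd r0 k" unfolding Gd_def
    proof (intro CollectI allI impI)
      fix i j assume ij: "i < k" "j < k" "i \<noteq> j" "U i \<in> lens1 r0 \<union> lens2 r0" "U j \<in> lens1 r0 \<union> lens2 r0"
      have ne: "U j \<noteq> U i" "U j \<noteq> U i + r0" "U j \<noteq> U i + (-r0)" using elim ij by auto
      show "qv r0 (U i) \<noteq> qv r0 (U j)" using ne ij(4,5) by (auto simp: qv_def)
    qed
  qed
qed

lemma Sw_iff1: "Sw r0 x \<in> lens1 r0 \<longleftrightarrow> x \<in> lens2 r0"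
  using r1 r2 by (auto simp: Sw_def lens1_def lens2_def)

lemma Sw_iff2: "Sw r0 x \<in> lens2 r0 \<longleftrightarrow> x \<in> lens1 r0"
  using r1 r2 by (auto simp: Sw_def lens1_def lens2_def)

lemma Sw_qv: "x \<in> lens1 r0 \<union> lens2 r0 \<Longrightarrow> qv r0 (Sw r0 x) = qv r0 x"
  using r1 r2 by (auto simp: Sw_def qv_def lens1_def lens2_def)

context
  fixes k :: nat and A B :: "nat set" and \<sigma> \<sigma>' :: "nat \<Rightarrow> nat"
  assumes A: "A \<subseteq> {..<k}" and B: "B \<subseteq> {..<k}" and dAB: "A \<inter> B = {}"
    and s: "\<sigma> \<in> BT (A \<union> B)" and s': "\<sigma>' \<in> BT (A \<union> B)"
begin

definition "pp l = (if l \<in> A \<union> B then inv_into (A \<union> B) \<sigma>' (\<sigma> l) else l)"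
definition "hh l x = (if l \<in> A \<union> B \<and> ((l \<in> A) \<noteq> (pp l \<in> A)) then Sw r0 x else x)"
definition "Phi U = (\<lambda>l. hh l (U (pp l)))"

lemma bs: "bij_betw \<sigma> (A \<union> B) {..<card (A \<union> B)}" using s by (simp add: BT_def)
lemma bs': "bij_betw \<sigma>' (A \<union> B) {..<card (A \<union> B)}" using s' by (simp add: BT_def)

lemma pp_bij: "bij_betw pp (A \<union> B) (A \<union> B)"
proof -
  have "bij_betw (inv_into (A \<union> B) \<sigma>' \<circ> \<sigma>) (A \<union> B) (A \<union> B)"
    using bij_betw_trans[OF bs bij_betw_inv_into[OF bs']] .
  then show ?thesis by (rule bij_betw_cong[THEN iffD1, rotated]) (auto simp: pp_def)
qed

lemma pp_T: "l \<in> A \<union> B \<Longrightarrow> pp l \<in> A \<union> B" using pp_bij by (auto simp: bij_betw_def)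

lemma pp_sigma: "l \<in> A \<union> B \<Longrightarrow> \<sigma>' (pp l) = \<sigma> l"
proof -
  assume l: "l \<in> A \<union> B"
  have "\<sigma> l \<in> \<sigma>' ` (A \<union> B)" using bs bs' l by (auto simp: bij_betw_def)
  then show ?thesis using l by (simp add: pp_def f_inv_into_f)
qed

lemma pp_inj: "inj pp"
proof (rule injI)
  fix x y assume e: "pp x = pp y"
  have ib: "inj_on pp (A \<union> B)" using pp_bij by (simp add: bij_betw_def)
  show "x = y"
  proof (cases "x \<in> A \<union> B"; cases "y \<in> A \<union> B")
    assume "x \<in> A \<union> B" "y \<in> A \<union> B" then show ?thesis using ib e by (auto simp: inj_on_def)
  next
    assume "x \<in> A \<union> B" "y \<notin> A \<union> B" then show ?thesis using e pp_T[of x] by (auto simp: pp_def)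
  next
    assume "x \<notin> A \<union> B" "y \<in> A \<union> B" then show ?thesis using e pp_T[of y] by (auto simp: pp_def)
  next
    assume "x \<notin> A \<union> B" "y \<notin> A \<union> B" then show ?thesis using e by (auto simp: pp_def)
  qed
qed

lemma pp_k: "pp ` {..<k} = {..<k}"
proof -
  have "pp ` (A \<union> B) = A \<union> B" using pp_bij by (simp add: bij_betw_def)
  moreover have "pp ` ({..<k} - (A \<union> B)) = {..<k} - (A \<union> B)" by (auto simp: pp_def)
  moreover have "{..<k} = (A \<union> B) \<union> ({..<k} - (A \<union> B))" using A B by auto
  ultimately show ?thesis by (metis image_Un)
qed

lemma hh_meas: "hh l \<in> measurable M01 M01"
  unfolding hh_def using Sw_meas01 by (cases "l \<in> A \<union> B \<and> ((l \<in> A) \<noteq> (pp l \<in> A))") auto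

lemma hh_distr: "distr M01 M01 (hh l) = M01"
proof (cases "l \<in> A \<union> B \<and> ((l \<in> A) \<noteq> (pp l \<in> A))")
  case True
  then have "hh l = Sw r0" by (auto simp: hh_def fun_eq_iff)
  then show ?thesis using Sw_distr[OF r1 r2] by simp
next
  case False
  then have "hh l = (\<lambda>x. x)" by (auto simp: hh_def fun_eq_iff)
  then show ?thesis by (simp add: distr_id2)
qed

lemma Phi_distr: "distr Mu Mu Phi = Mu"
proof -
  have e: "(\<lambda>\<omega>. \<lambda>n\<in>UNIV. \<omega> (pp n)) = (\<lambda>U l. U (pp l))" by (auto simp: restrict_def fun_eq_iff)
  have r: "distr Mu Mu (\<lambda>U l. U (pp l)) = Mu"
    using distr_PiM_reindex[of UNIV "\<lambda>_. M01" pp UNIV] pp_inj prob_M01 unfolding e by simp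
  have h: "distr Mu Mu (\<lambda>V l. hh l (V l)) = Mu"
    by (rule distr_PiM_coordmap[OF prob_M01 hh_meas hh_distr])
  have mr: "(\<lambda>U l. U (pp l)) \<in> measurable Mu Mu"
    by (rule measurable_PiM_single') (auto simp: space_PiM)
  have mh: "(\<lambda>V l. hh l (V l)) \<in> measurable Mu Mu"
    by (rule measurable_PiM_single') (auto simp: space_PiM intro: measurable_compose[OF _ hh_meas])
  have "distr Mu Mu Phi = distr (distr Mu Mu (\<lambda>U l. U (pp l))) Mu (\<lambda>V l. hh l (V l))"
    by (subst distr_distr[OF mh mr]) (simp add: Phi_def[abs_def] comp_def)
  also have "\<dots> = Mu" using r h by simp
  finally show ?thesis .
qed

definition "cnd V l \<longleftrightarrow> (V l \<in> lens1 r0 \<longleftrightarrow> l \<in> A) \<and> (V l \<in> lens2 r0 \<longleftrightarrow> l \<in> B)"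

lemma cnd_Phi: "cnd (Phi U) l \<longleftrightarrow> cnd U (pp l)"
proof (cases "l \<in> A \<union> B")
  case False
  then show ?thesis by (simp add: cnd_def Phi_def hh_def pp_def)
next
  case True
  then have p: "pp l \<in> A \<union> B" by (rule pp_T)
  show ?thesis
  proof (cases "(l \<in> A) \<noteq> (pp l \<in> A)")
    case True
    then show ?thesis using \<open>l \<in> A \<union> B\<close> p dAB by (auto simp: cnd_def Phi_def hh_def Sw_iff1 Sw_iff2)
  next
    case False
    then show ?thesis using \<open>l \<in> A \<union> B\<close> p dAB by (auto simp: cnd_def Phi_def hh_def)
  qed
qed

lemma EAB_cnd: "U \<in> EAB r0 k A B \<longleftrightarrow> (\<forall>l\<in>{..<k}. cnd U l)"
  by (auto simp: EAB_def cnd_def)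

lemma Phi_EAB: "Phi U \<in> EAB r0 k A B \<longleftrightarrow> U \<in> EAB r0 k A B"
proof -
  have "Phi U \<in> EAB r0 k A B \<longleftrightarrow> (\<forall>l\<in>{..<k}. cnd U (pp l))" by (simp add: EAB_cnd cnd_Phi)
  also have "\<dots> \<longleftrightarrow> (\<forall>l\<in>pp ` {..<k}. cnd U l)" by simp
  also have "\<dots> \<longleftrightarrow> U \<in> EAB r0 k A B" by (simp add: pp_k EAB_cnd)
  finally show ?thesis .
qed

lemma Phi_qv:
  assumes U: "U \<in> EAB r0 k A B" and l: "l \<in> A \<union> B"
  shows "qv r0 (Phi U l) = qv r0 (U (pp l))"
proof -
  have p: "pp l \<in> A \<union> B" using l by (rule pp_T)
  then have "U (pp l) \<in> lens1 r0 \<union> lens2 r0" using U A B by (auto simp: EAB_def)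
  then show ?thesis by (auto simp: Phi_def hh_def Sw_qv)
qed

lemma Phi_Rk:
  assumes U: "U \<in> EAB r0 k A B"
  shows "Phi U \<in> Rk r0 (A \<union> B) \<sigma> \<longleftrightarrow> U \<in> Rk r0 (A \<union> B) \<sigma>'"
proof -
  have "Phi U \<in> Rk r0 (A \<union> B) \<sigma> \<longleftrightarrow>
     (\<forall>i\<in>A \<union> B. \<forall>j\<in>A \<union> B. \<sigma>' (pp i) < \<sigma>' (pp j) \<longrightarrow> qv r0 (U (pp j)) < qv r0 (U (pp i)))"
    by (simp add: Rk_def Phi_qv[OF U] pp_sigma)
  also have "\<dots> \<longleftrightarrow> (\<forall>i\<in>pp ` (A \<union> B). \<forall>j\<in>pp ` (A \<union> B). \<sigma>' i < \<sigma>' j \<longrightarrow> qv r0 (U j) < qv r0 (U i))"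
    by simp
  also have "\<dots> \<longleftrightarrow> U \<in> Rk r0 (A \<union> B) \<sigma>'"
    using pp_bij by (simp add: bij_betw_def Rk_def)
  finally show ?thesis .
qed

lemma emeasure_swap:
  "emeasure Mu (EAB r0 k A B \<inter> Rk r0 (A \<union> B) \<sigma>) = emeasure Mu (EAB r0 k A B \<inter> Rk r0 (A \<union> B) \<sigma>')"
proof -
  have fT: "finite (A \<union> B)" using A B finite_subset by auto
  have mP: "Phi \<in> measurable Mu Mu"
  proof -
    have "(\<lambda>U l. hh l (U (pp l))) \<in> measurable Mu Mu"
      by (rule measurable_PiM_single') (auto simp: space_PiM intro: measurable_compose[OF _ hh_meas])
    then show ?thesis by (simp add: Phi_def[abs_def])
  qed
  have S: "EAB r0 k A B \<inter> Rk r0 (A \<union> B) \<sigma> \<in> sets Mu" using fT by measurable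
  have "emeasure Mu (EAB r0 k A B \<inter> Rk r0 (A \<union> B) \<sigma>) = emeasure (distr Mu Mu Phi) (EAB r0 k A B \<inter> Rk r0 (A \<union> B) \<sigma>)"
    by (simp add: Phi_distr)
  also have "\<dots> = emeasure Mu (Phi -` (EAB r0 k A B \<inter> Rk r0 (A \<union> B) \<sigma>) \<inter> space Mu)"
    by (rule emeasure_distr[OF mP S])
  also have "Phi -` (EAB r0 k A B \<inter> Rk r0 (A \<union> B) \<sigma>) \<inter> space Mu = EAB r0 k A B \<inter> Rk r0 (A \<union> B) \<sigma>'"
  proof (intro equalityI subsetI)
    fix U assume "U \<in> Phi -` (EAB r0 k A B \<inter> Rk r0 (A \<union> B) \<sigma>) \<inter> space Mu"
    then have 1: "Phi U \<in> EAB r0 k A B" and 2: "Phi U \<in> Rk r0 (A \<union> B) \<sigma>" by auto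
    from 1 have 3: "U \<in> EAB r0 k A B" by (simp only: Phi_EAB)
    from 2 have "U \<in> Rk r0 (A \<union> B) \<sigma>'" by (simp only: Phi_Rk[OF 3])
    with 3 show "U \<in> EAB r0 k A B \<inter> Rk r0 (A \<union> B) \<sigma>'" by blast
  next
    fix U assume "U \<in> EAB r0 k A B \<inter> Rk r0 (A \<union> B) \<sigma>'"
    then have 3: "U \<in> EAB r0 k A B" and 2: "U \<in> Rk r0 (A \<union> B) \<sigma>'" by auto
    from 3 have 1: "Phi U \<in> EAB r0 k A B" by (simp only: Phi_EAB)
    from 2 have "Phi U \<in> Rk r0 (A \<union> B) \<sigma>" by (simp only: Phi_Rk[OF 3])
    with 1 show "U \<in> Phi -` (EAB r0 k A B \<inter> Rk r0 (A \<union> B) \<sigma>) \<inter> space Mu" by simp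
  qed
  finally show ?thesis .
qed

end

end


definition PP :: "nat \<Rightarrow> (nat set \<times> nat set) set" where
  "PP k = {(A,B). A \<subseteq> {..<k} \<and> B \<subseteq> {..<k} \<and> A \<inter> B = {}}"

definition Idx :: "nat \<Rightarrow> ((nat set \<times> nat set) \<times> (nat \<Rightarrow> nat)) set" where
  "Idx k = Sigma (PP k) (\<lambda>p. BT (fst p \<union> snd p))"

definition Base :: "real \<Rightarrow> nat \<Rightarrow> ((nat set \<times> nat set) \<times> (nat \<Rightarrow> nat)) \<Rightarrow> (nat \<Rightarrow> real) set" where
  "Base r0 k x = EAB r0 k (fst (fst x)) (snd (fst x)) \<inter> Rk r0 (fst (fst x) \<union> snd (fst x)) (snd x)"

lemma finite_PP: "finite (PP k)"
  by (rule finite_subset[of _ "Pow {..<k} \<times> Pow {..<k}"]) (auto simp: PP_def)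

lemma finite_Idx: "finite (Idx k)"
  unfolding Idx_def
proof (rule finite_SigmaI[OF finite_PP])
  fix p assume "p \<in> PP k"
  then have "finite (fst p \<union> snd p)" by (auto simp: PP_def dest: finite_subset[OF _ finite_lessThan])
  then show "finite (BT (fst p \<union> snd p))" by (rule finite_BT)
qed

lemma sets_Base[measurable]: "x \<in> Idx k \<Longrightarrow> Base r0 k x \<in> sets Mu"
proof -
  assume "x \<in> Idx k"
  then have "finite (fst (fst x) \<union> snd (fst x))" by (auto simp: Idx_def PP_def dest: finite_subset[OF _ finite_lessThan])
  then show ?thesis unfolding Base_def by measurable
qed

context
  fixes r0 :: real
  assumes r1: "1/3 < r0" and r2: "r0 < 1/2"
begin

lemma cover:
  assumes U: "U \<in> Gd r0 k"
  shows "\<exists>x\<in>Idx k. U \<in> Base r0 k x"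
proof -
  define A where "A = {l. l < k \<and> U l \<in> lens1 r0}"
  define B where "B = {l. l < k \<and> U l \<in> lens2 r0}"
  have AB: "A \<subseteq> {..<k}" "B \<subseteq> {..<k}" "A \<inter> B = {}"
    using lens_disj[OF r1 r2] by (auto simp: A_def B_def)
  have E: "U \<in> EAB r0 k A B" by (auto simp: EAB_def A_def B_def)
  note re = rank_ex[OF r1 r2 AB U E]
  show ?thesis
    by (rule bexI[of _ "((A,B), rkf (A \<union> B) (\<lambda>l. qv r0 (U l)))"])
       (use re AB E in \<open>auto simp: Idx_def PP_def Base_def\<close>)
qed

lemma unique:
  assumes U: "U \<in> Gd r0 k" and x: "x \<in> Idx k" and y: "y \<in> Idx k"
    and Ux: "U \<in> Base r0 k x" and Uy: "U \<in> Base r0 k y"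
  shows "x = y"
proof -
  obtain A B \<sigma> where x': "x = ((A,B),\<sigma>)" by (metis prod.collapse)
  obtain A' B' \<sigma>' where y': "y = ((A',B'),\<sigma>')" by (metis prod.collapse)
  have AB: "A \<subseteq> {..<k}" "B \<subseteq> {..<k}" "A \<inter> B = {}" "\<sigma> \<in> BT (A \<union> B)"
    using x x' by (auto simp: Idx_def PP_def)
  have AB': "A' \<subseteq> {..<k}" "B' \<subseteq> {..<k}" "A' \<inter> B' = {}" "\<sigma>' \<in> BT (A' \<union> B')"
    using y y' by (auto simp: Idx_def PP_def)
  have E: "U \<in> EAB r0 k A B" "U \<in> Rk r0 (A \<union> B) \<sigma>" using Ux x' by (auto simp: Base_def)
  have E': "U \<in> EAB r0 k A' B'" "U \<in> Rk r0 (A' \<union> B') \<sigma>'" using Uy y' by (auto simp: Base_def)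
  have "A = {l. l < k \<and> U l \<in> lens1 r0}" using E(1) AB by (auto simp: EAB_def)
  moreover have "A' = {l. l < k \<and> U l \<in> lens1 r0}" using E'(1) AB' by (auto simp: EAB_def)
  moreover have "B = {l. l < k \<and> U l \<in> lens2 r0}" using E(1) AB by (auto simp: EAB_def)
  moreover have "B' = {l. l < k \<and> U l \<in> lens2 r0}" using E'(1) AB' by (auto simp: EAB_def)
  ultimately have eA: "A' = A" and eB: "B' = B" by auto
  have "\<sigma> = rkf (A \<union> B) (\<lambda>l. qv r0 (U l))"
    by (rule rank_unique[OF r1 r2 AB(1-3) U E(1) AB(4) E(2)])
  moreover have "\<sigma>' = rkf (A \<union> B) (\<lambda>l. qv r0 (U l))"
    using rank_unique[OF r1 r2 AB'(1-3) U E'(1) AB'(4) E'(2)] eA eB by simp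
  ultimately show ?thesis using x' y' eA eB by simp
qed

lemma decomp:
  assumes X: "X \<in> sets Mu"
    and psi: "\<And>x U. x \<in> Idx k \<Longrightarrow> U \<in> Gd r0 k \<Longrightarrow> U \<in> Base r0 k x \<Longrightarrow> (U \<in> X \<longleftrightarrow> \<psi> x)"
  shows "emeasure Mu X = (\<Sum>x\<in>{x \<in> Idx k. \<psi> x}. emeasure Mu (Base r0 k x))"
proof -
  let ?I = "{x \<in> Idx k. \<psi> x}"
  have G: "AE U in Mu. U \<in> Gd r0 k" by (rule AE_Gd[OF r1 r2])
  have "emeasure Mu X = emeasure Mu (X \<inter> Gd r0 k)"
    by (rule emeasure_eq_AE) (use G X in auto)
  also have "X \<inter> Gd r0 k = (\<Union>x\<in>?I. Gd r0 k \<inter> Base r0 k x)"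
  proof (intro equalityI subsetI)
    fix U assume U: "U \<in> X \<inter> Gd r0 k"
    then obtain x where x: "x \<in> Idx k" "U \<in> Base r0 k x" using cover by blast
    then have "\<psi> x" using psi U by blast
    then show "U \<in> (\<Union>x\<in>?I. Gd r0 k \<inter> Base r0 k x)" using x U by blast
  next
    fix U assume "U \<in> (\<Union>x\<in>?I. Gd r0 k \<inter> Base r0 k x)"
    then obtain x where x: "x \<in> Idx k" "\<psi> x" "U \<in> Gd r0 k" "U \<in> Base r0 k x" by blast
    then show "U \<in> X \<inter> Gd r0 k" using psi by blast
  qed
  also have "emeasure Mu (\<Union>x\<in>?I. Gd r0 k \<inter> Base r0 k x) = (\<Sum>x\<in>?I. emeasure Mu (Gd r0 k \<inter> Base r0 k x))"
  proof (rule sum_emeasure[symmetric])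
    show "(\<lambda>x. Gd r0 k \<inter> Base r0 k x) ` ?I \<subseteq> sets Mu" by auto
    show "finite ?I" using finite_Idx by auto
    show "disjoint_family_on (\<lambda>x. Gd r0 k \<inter> Base r0 k x) ?I"
      unfolding disjoint_family_on_def using unique by blast
  qed
  also have "\<dots> = (\<Sum>x\<in>?I. emeasure Mu (Base r0 k x))"
  proof (intro sum.cong refl)
    fix x assume "x \<in> ?I"
    then have [measurable]: "Base r0 k x \<in> sets Mu" by auto
    show "emeasure Mu (Gd r0 k \<inter> Base r0 k x) = emeasure Mu (Base r0 k x)"
      by (rule emeasure_eq_AE) (use G in auto)
  qed
  finally show ?thesis .
qed

end


lemma fo_pred[measurable]: "Measurable.pred Mu (\<lambda>U. fo U i)"
proof -
  have "{U \<in> space Mu. \<forall>i'\<in>{..<i}. U i' < U i \<or> U i < U i'} \<in> sets Mu" by measurable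
  moreover have "{U \<in> space Mu. \<forall>i'\<in>{..<i}. U i' < U i \<or> U i < U i'} = {U \<in> space Mu. fo U i}"
    by (auto simp: fo_def linorder_neq_iff)
  ultimately show ?thesis by (simp add: pred_def)
qed

definition Xk :: "real \<Rightarrow> nat \<Rightarrow> nat \<Rightarrow> nat \<Rightarrow> nat \<Rightarrow> (nat \<Rightarrow> real) set" where
  "Xk r0 k n a b = {U \<in> space Mu. sigma3 r0 (U ` {..<k}) = n \<and> mcount (lens1 r0) (U ` {..<k}) = a \<and> mcount (lens2 r0) (U ` {..<k}) = b}"

definition Yk :: "real \<Rightarrow> nat \<Rightarrow> nat \<Rightarrow> nat \<Rightarrow> (nat \<Rightarrow> real) set" where
  "Yk r0 k a b = {U \<in> space Mu. mcount (lens1 r0) (U ` {..<k}) = a \<and> mcount (lens2 r0) (U ` {..<k}) = b}"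

lemma mcount_eq: "mcount L (U ` {..<k}) = card {i \<in> {..<k}. U i \<in> L \<and> fo U i}"
  unfolding mcount_def card_img_L by (intro arg_cong[where f=card]) auto

lemma mcount_pred[measurable]: "L \<in> sets borel \<Longrightarrow> Measurable.pred Mu (\<lambda>U. mcount L (U ` {..<k}) = c)"
  unfolding mcount_eq by (rule card_pred_measurable) auto

context
  fixes r0 :: real
  assumes r1: "1/3 < r0" and r2: "r0 < 1/2"
begin

lemma sig_card: "sigma3 r0 (U ` {..<k}) = card {p \<in> {..<k} \<times> {..<k}. U (fst p) \<in> lens1 r0 \<and> U (snd p) \<in> lens2 r0
    \<and> U (snd p) - U (fst p) < r0 \<and> fo U (fst p) \<and> fo U (snd p)}"
  unfolding sigma3_eq[OF r1 r2] card_img_pairs[of U k "\<lambda>x y. x \<in> lens1 r0 \<and> y \<in> lens2 r0 \<and> y - x < r0"]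
  by (intro arg_cong[where f=card]) auto

lemma sig_pred[measurable]: "Measurable.pred Mu (\<lambda>U. sigma3 r0 (U ` {..<k}) = c)"
  unfolding sig_card by (rule card_pred_measurable) (auto simp: lens1_def lens2_def)

lemma sets_Xk[measurable]: "Xk r0 k n a b \<in> sets Mu"
proof -
  have [measurable]: "lens1 r0 \<in> sets borel" "lens2 r0 \<in> sets borel" by (auto simp: lens1_def lens2_def)
  show ?thesis unfolding Xk_def by measurable
qed

lemma sets_Yk[measurable]: "Yk r0 k a b \<in> sets Mu"
proof -
  have [measurable]: "lens1 r0 \<in> sets borel" "lens2 r0 \<in> sets borel" by (auto simp: lens1_def lens2_def)
  show ?thesis unfolding Yk_def by measurable
qed

lemma piece_vals:
  assumes x: "x \<in> Idx k" and U: "U \<in> Gd r0 k" and Ux: "U \<in> Base r0 k x"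
  shows "mcount (lens1 r0) (U ` {..<k}) = card (fst (fst x))"
    "mcount (lens2 r0) (U ` {..<k}) = card (snd (fst x))"
    "sigma3 r0 (U ` {..<k}) = invs (fst (fst x)) (snd (fst x)) (snd x)"
proof -
  obtain A B \<sigma> where x': "x = ((A,B),\<sigma>)" by (metis prod.collapse)
  have AB: "A \<subseteq> {..<k}" "B \<subseteq> {..<k}" "A \<inter> B = {}" "\<sigma> \<in> BT (A \<union> B)"
    using x x' by (auto simp: Idx_def PP_def)
  have E: "U \<in> EAB r0 k A B" "U \<in> Rk r0 (A \<union> B) \<sigma>" using Ux x' by (auto simp: Base_def)
  show "mcount (lens1 r0) (U ` {..<k}) = card (fst (fst x))"
    using count1[OF r1 r2 AB(1-3) U E(1)] x' by (simp add: mcount_def)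
  show "mcount (lens2 r0) (U ` {..<k}) = card (snd (fst x))"
    using count2[OF r1 r2 AB(1-3) U E(1)] x' by (simp add: mcount_def)
  show "sigma3 r0 (U ` {..<k}) = invs (fst (fst x)) (snd (fst x)) (snd x)"
    using sig_eq[OF r1 r2 AB(1-3) U E(1)] inv_eq[OF r1 r2 AB(1-3) U E(1) AB(4) E(2)] x' by simp
qed

definition "eAB k p = emeasure Mu (Base r0 k (p, rkf (fst p \<union> snd p) real))"

lemma e_const:
  assumes x: "x \<in> Idx k"
  shows "emeasure Mu (Base r0 k x) = eAB k (fst x)"
proof -
  obtain A B \<sigma> where x': "x = ((A,B),\<sigma>)" by (metis prod.collapse)
  have AB: "A \<subseteq> {..<k}" "B \<subseteq> {..<k}" "A \<inter> B = {}" "\<sigma> \<in> BT (A \<union> B)"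
    using x x' by (auto simp: Idx_def PP_def)
  have fT: "finite (A \<union> B)" using AB(1,2) by (meson finite_UnI finite_lessThan finite_subset)
  have s0: "rkf (A \<union> B) real \<in> BT (A \<union> B)" using rkf_BT(1)[OF fT] by (simp add: inj_on_def)
  show ?thesis
    using emeasure_swap[OF r1 r2 AB(1-4) s0] x' by (simp add: eAB_def Base_def)
qed

definition "PPab k a b = {p \<in> PP k. card (fst p) = a \<and> card (snd p) = b}"

lemma sum_split:
  "(\<Sum>x\<in>{x \<in> Idx k. card (fst (fst x)) = a \<and> card (snd (fst x)) = b \<and> Q (fst x) (snd x)}. emeasure Mu (Base r0 k x))
   = (\<Sum>p\<in>PPab k a b. of_nat (card {\<sigma> \<in> BT (fst p \<union> snd p). Q p \<sigma>}) * eAB k p)"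
proof -
  have fPP: "finite (PPab k a b)" using finite_PP by (auto simp: PPab_def)
  have fB: "\<forall>p\<in>PPab k a b. finite {\<sigma> \<in> BT (fst p \<union> snd p). Q p \<sigma>}"
  proof
    fix p assume "p \<in> PPab k a b"
    then have "finite (fst p \<union> snd p)" by (auto simp: PPab_def PP_def dest: finite_subset[OF _ finite_lessThan])
    then have "finite (BT (fst p \<union> snd p))" by (rule finite_BT)
    then show "finite {\<sigma> \<in> BT (fst p \<union> snd p). Q p \<sigma>}" by (rule finite_subset[rotated]) auto
  qed
  have eq: "{x \<in> Idx k. card (fst (fst x)) = a \<and> card (snd (fst x)) = b \<and> Q (fst x) (snd x)}
     = Sigma (PPab k a b) (\<lambda>p. {\<sigma> \<in> BT (fst p \<union> snd p). Q p \<sigma>})"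
    by (auto simp: Idx_def PPab_def)
  have "(\<Sum>x\<in>{x \<in> Idx k. card (fst (fst x)) = a \<and> card (snd (fst x)) = b \<and> Q (fst x) (snd x)}. emeasure Mu (Base r0 k x))
      = (\<Sum>x\<in>Sigma (PPab k a b) (\<lambda>p. {\<sigma> \<in> BT (fst p \<union> snd p). Q p \<sigma>}). eAB k (fst x))"
    unfolding eq by (intro sum.cong refl e_const) (auto simp: Idx_def PPab_def)
  also have "\<dots> = (\<Sum>p\<in>PPab k a b. \<Sum>\<sigma>\<in>{\<sigma> \<in> BT (fst p \<union> snd p). Q p \<sigma>}. eAB k p)"
    using sum.Sigma[OF fPP fB, of "\<lambda>p \<sigma>. eAB k p"] by (simp add: split_beta')
  also have "\<dots> = (\<Sum>p\<in>PPab k a b. of_nat (card {\<sigma> \<in> BT (fst p \<union> snd p). Q p \<sigma>}) * eAB k p)"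
    by simp
  finally show ?thesis .
qed

lemma perk:
  "emeasure Mu (Xk r0 k n a b) * of_nat (card (words a b))
   = emeasure Mu (Yk r0 k a b) * of_nat (card {w \<in> words a b. (\<Sum>r = 0..a. r * pistar w r) = n})"
proof -
  have X: "emeasure Mu (Xk r0 k n a b) = (\<Sum>x\<in>{x \<in> Idx k. card (fst (fst x)) = a \<and> card (snd (fst x)) = b \<and> invs (fst (fst x)) (snd (fst x)) (snd x) = n}. emeasure Mu (Base r0 k x))"
  proof (rule decomp[OF r1 r2 sets_Xk])
    fix x U assume "x \<in> Idx k" "U \<in> Gd r0 k" "U \<in> Base r0 k x"
    note pv = piece_vals[OF this]
    show "U \<in> Xk r0 k n a b \<longleftrightarrow> card (fst (fst x)) = a \<and> card (snd (fst x)) = b \<and> invs (fst (fst x)) (snd (fst x)) (snd x) = n"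
      using pv by (auto simp: Xk_def)
  qed
  have Y: "emeasure Mu (Yk r0 k a b) = (\<Sum>x\<in>{x \<in> Idx k. card (fst (fst x)) = a \<and> card (snd (fst x)) = b \<and> True}. emeasure Mu (Base r0 k x))"
  proof (rule decomp[OF r1 r2 sets_Yk])
    fix x U assume "x \<in> Idx k" "U \<in> Gd r0 k" "U \<in> Base r0 k x"
    note pv = piece_vals[OF this]
    show "U \<in> Yk r0 k a b \<longleftrightarrow> card (fst (fst x)) = a \<and> card (snd (fst x)) = b \<and> True"
      using pv by (auto simp: Yk_def)
  qed
  have Nw: "{w \<in> words a b. (\<Sum>r = 0..a. r * pistar w r) = n} = {w \<in> words a b. invw w = n}"
    using area_words by auto
  have cs: "card {\<sigma> \<in> BT (fst p \<union> snd p). invs (fst p) (snd p) \<sigma> = n} * card (words a b)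
      = card {\<sigma> \<in> BT (fst p \<union> snd p). True} * card {w \<in> words a b. invw w = n}" if p: "p \<in> PPab k a b" for p
  proof -
    have "finite (fst p)" "finite (snd p)" "fst p \<inter> snd p = {}" "card (fst p) = a" "card (snd p) = b"
      using p by (auto simp: PPab_def PP_def dest: finite_subset[OF _ finite_lessThan])
    then show ?thesis using count_sigma[of "fst p" "snd p" n] by simp
  qed
  have "emeasure Mu (Xk r0 k n a b) * of_nat (card (words a b))
     = (\<Sum>p\<in>PPab k a b. of_nat (card {\<sigma> \<in> BT (fst p \<union> snd p). invs (fst p) (snd p) \<sigma> = n}) * eAB k p) * of_nat (card (words a b))"
    unfolding X sum_split[where Q="\<lambda>p \<sigma>. invs (fst p) (snd p) \<sigma> = n"] ..
  also have "\<dots> = (\<Sum>p\<in>PPab k a b. of_nat (card {\<sigma> \<in> BT (fst p \<union> snd p). invs (fst p) (snd p) \<sigma> = n}) * eAB k p * of_nat (card (words a b)))"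
    by (rule sum_distrib_right)
  also have "\<dots> = (\<Sum>p\<in>PPab k a b. of_nat (card {\<sigma> \<in> BT (fst p \<union> snd p). True}) * eAB k p * of_nat (card {w \<in> words a b. invw w = n}))"
  proof (intro sum.cong refl)
    fix p assume "p \<in> PPab k a b"
    note c = arg_cong[OF cs[OF this], of "of_nat :: nat \<Rightarrow> ennreal"]
    then show "of_nat (card {\<sigma> \<in> BT (fst p \<union> snd p). invs (fst p) (snd p) \<sigma> = n}) * eAB k p * of_nat (card (words a b))
      = of_nat (card {\<sigma> \<in> BT (fst p \<union> snd p). True}) * eAB k p * of_nat (card {w \<in> words a b. invw w = n})"
      by (simp add: ac_simps of_nat_mult[symmetric] del: of_nat_mult)
  qed
  also have "\<dots> = (\<Sum>p\<in>PPab k a b. of_nat (card {\<sigma> \<in> BT (fst p \<union> snd p). True}) * eAB k p) * of_nat (card {w \<in> words a b. invw w = n})"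
    by (rule sum_distrib_right[symmetric])
  also have "\<dots> = emeasure Mu (Yk r0 k a b) * of_nat (card {w \<in> words a b. invw w = n})"
    unfolding Y sum_split[where Q="\<lambda>p \<sigma>. True"] ..
  finally show ?thesis unfolding Nw .
qed

end


lemma prob_Mu: "prob_space Mu"
  by (rule prob_space_PiM) (rule prob_M01)

lemma main_emeasure:
  fixes lam r0 :: real and a b n :: nat
  assumes r1: "1/3 < r0" and r2: "r0 < 1/2"
  defines "P \<equiv> ppp_space lam"
  defines "EvX \<equiv> {\<omega> \<in> space P. sigma3 r0 (ppp_points \<omega>) = n \<and>
              mcount (lens1 r0) (ppp_points \<omega>) = a \<and> mcount (lens2 r0) (ppp_points \<omega>) = b}"
  defines "EvY \<equiv> {\<omega> \<in> space P.
              mcount (lens1 r0) (ppp_points \<omega>) = a \<and> mcount (lens2 r0) (ppp_points \<omega>) = b}"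
  shows "emeasure P EvX * of_nat (card (words a b)) = emeasure P EvY * of_nat (card {w \<in> words a b. (\<Sum>r = 0..a. r * pistar w r) = n})"
proof -
  interpret Mu: prob_space Mu by (rule prob_Mu)
  let ?N = "measure_pmf (poisson_pmf lam)"
  have P: "P = ?N \<Otimes>\<^sub>M Mu" by (simp add: P_def ppp_space_def)
  have sP: "sets P = sets (count_space UNIV \<Otimes>\<^sub>M Mu)"
    unfolding P by (rule sets_pair_measure_cong[OF sets_measure_pmf_count_space refl])
  have spP: "space P = UNIV" unfolding P by (simp add: space_pair_measure)
  have pp: "ppp_points (k, U) = U ` {..<k}" for k U by (simp add: ppp_points_def)
  have meas: "(\<lambda>\<omega>. Q (fst \<omega>) (snd \<omega>)) \<in> measurable P (count_space UNIV)"
    if Q: "\<And>k. {U \<in> space Mu. Q k U} \<in> sets Mu" for Q :: "nat \<Rightarrow> (nat \<Rightarrow> real) \<Rightarrow> bool"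
  proof -
    have "(\<lambda>\<omega>. Q (fst \<omega>) (snd \<omega>)) \<in> measurable (count_space UNIV \<Otimes>\<^sub>M Mu) (count_space UNIV)"
    proof (rule measurable_pair_measure_countable1)
      fix k :: nat
      show "(\<lambda>y. Q (fst (k, y)) (snd (k, y))) \<in> measurable Mu (count_space UNIV)"
        using Q[of k] by (simp add: pred_def)
    qed simp
    then have "{\<omega> \<in> space (count_space UNIV \<Otimes>\<^sub>M Mu). Q (fst \<omega>) (snd \<omega>)} \<in> sets (count_space UNIV \<Otimes>\<^sub>M Mu)"
      by (simp add: pred_def)
    then show ?thesis unfolding pred_def using sP sets_eq_imp_space_eq[OF sP] by simp
  qed
  have sets_EvX: "EvX \<in> sets P"
  proof -
    have "(\<lambda>\<omega>. (\<lambda>k U. U \<in> Xk r0 k n a b) (fst \<omega>) (snd \<omega>)) \<in> measurable P (count_space UNIV)"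
      by (rule meas) (use sets_Xk[OF r1 r2] in \<open>simp add: Int_absorb2\<close>)
    then have "{\<omega> \<in> space P. snd \<omega> \<in> Xk r0 (fst \<omega>) n a b} \<in> sets P" by (simp add: pred_def)
    moreover have "{\<omega> \<in> space P. snd \<omega> \<in> Xk r0 (fst \<omega>) n a b} = EvX"
      by (auto simp: EvX_def Xk_def ppp_points_def)
    ultimately show ?thesis by simp
  qed
  have sets_EvY: "EvY \<in> sets P"
  proof -
    have "(\<lambda>\<omega>. (\<lambda>k U. U \<in> Yk r0 k a b) (fst \<omega>) (snd \<omega>)) \<in> measurable P (count_space UNIV)"
      by (rule meas) (use sets_Yk[OF r1 r2] in \<open>simp add: Int_absorb2\<close>)
    then have "{\<omega> \<in> space P. snd \<omega> \<in> Yk r0 (fst \<omega>) a b} \<in> sets P" by (simp add: pred_def)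
    moreover have "{\<omega> \<in> space P. snd \<omega> \<in> Yk r0 (fst \<omega>) a b} = EvY"
      by (auto simp: EvY_def Yk_def ppp_points_def)
    ultimately show ?thesis by simp
  qed
  have eX: "emeasure P EvX = (\<integral>\<^sup>+k. emeasure Mu (Xk r0 k n a b) \<partial>?N)"
  proof -
    have "emeasure P EvX = (\<integral>\<^sup>+k. emeasure Mu (Pair k -` EvX) \<partial>?N)"
      unfolding P by (rule Mu.emeasure_pair_measure_alt) (use sets_EvX P in simp)
    also have "\<dots> = (\<integral>\<^sup>+k. emeasure Mu (Xk r0 k n a b) \<partial>?N)"
      by (intro nn_integral_cong arg_cong2[where f=emeasure] refl) (auto simp: EvX_def Xk_def spP pp)
    finally show ?thesis .
  qed
  have eY: "emeasure P EvY = (\<integral>\<^sup>+k. emeasure Mu (Yk r0 k a b) \<partial>?N)"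
  proof -
    have "emeasure P EvY = (\<integral>\<^sup>+k. emeasure Mu (Pair k -` EvY) \<partial>?N)"
      unfolding P by (rule Mu.emeasure_pair_measure_alt) (use sets_EvY P in simp)
    also have "\<dots> = (\<integral>\<^sup>+k. emeasure Mu (Yk r0 k a b) \<partial>?N)"
      by (intro nn_integral_cong arg_cong2[where f=emeasure] refl) (auto simp: EvY_def Yk_def spP pp)
    finally show ?thesis .
  qed
  have "emeasure P EvX * of_nat (card (words a b)) = (\<integral>\<^sup>+k. emeasure Mu (Xk r0 k n a b) * of_nat (card (words a b)) \<partial>?N)"
    unfolding eX by (rule nn_integral_multc[symmetric]) simp
  also have "\<dots> = (\<integral>\<^sup>+k. emeasure Mu (Yk r0 k a b) * of_nat (card {w \<in> words a b. (\<Sum>r = 0..a. r * pistar w r) = n}) \<partial>?N)"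
    by (intro nn_integral_cong perk[OF r1 r2])
  also have "\<dots> = emeasure P EvY * of_nat (card {w \<in> words a b. (\<Sum>r = 0..a. r * pistar w r) = n})"
    unfolding eY by (rule nn_integral_multc) simp
  finally show ?thesis .
qed


theorem mainTheorem3:
  fixes lam r0 :: real and a b n :: nat
  assumes "0 < lam" and "1/3 < r0" and "r0 < 1/2"
  shows "measure (ppp_space lam)
           {\<omega> \<in> space (ppp_space lam). sigma3 r0 (ppp_points \<omega>) = n \<and>
              mcount (lens1 r0) (ppp_points \<omega>) = a \<and> mcount (lens2 r0) (ppp_points \<omega>) = b}
       = measure (ppp_space lam)
           {\<omega> \<in> space (ppp_space lam).
              mcount (lens1 r0) (ppp_points \<omega>) = a \<and> mcount (lens2 r0) (ppp_points \<omega>) = b}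
         * (real (card {w \<in> words a b. (\<Sum>r = 0..a. r * pistar w r) = n})
            / real ((a + b) choose a))"
proof -
  let ?P = "ppp_space lam"
  let ?X = "{\<omega> \<in> space (ppp_space lam). sigma3 r0 (ppp_points \<omega>) = n \<and>
              mcount (lens1 r0) (ppp_points \<omega>) = a \<and> mcount (lens2 r0) (ppp_points \<omega>) = b}"
  let ?Y = "{\<omega> \<in> space (ppp_space lam).
              mcount (lens1 r0) (ppp_points \<omega>) = a \<and> mcount (lens2 r0) (ppp_points \<omega>) = b}"
  let ?W = "card (words a b)"
  let ?Nw = "card {w \<in> words a b. (\<Sum>r = 0..a. r * pistar w r) = n}"
  interpret P: prob_space ?P
    unfolding ppp_space_def by (intro prob_space_pair prob_Mu prob_space_measure_pmf)
  have e: "emeasure ?P ?X * of_nat ?W = emeasure ?P ?Y * of_nat ?Nw"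
    using main_emeasure[OF assms(2,3), of lam n a b] by simp
  then have "ennreal (measure ?P ?X) * ennreal (real ?W) = ennreal (measure ?P ?Y) * ennreal (real ?Nw)"
    by (simp add: P.emeasure_eq_measure ennreal_of_nat_eq_real_of_nat)
  then have "ennreal (measure ?P ?X * real ?W) = ennreal (measure ?P ?Y * real ?Nw)"
    by (simp add: ennreal_mult)
  then have eq: "measure ?P ?X * real ?W = measure ?P ?Y * real ?Nw"
    by (rule ennreal_inj[THEN iffD1, rotated 2]) auto
  have W: "?W = (a + b) choose a" by (rule card_words)
  have Wpos: "0 < real ?W" unfolding W by simp
  show ?thesis
    using eq Wpos unfolding W[symmetric] by (simp add: field_simps)
qed


end
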